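(* Assume separability and full support, with the distributions $P_x$, $Q_y$ known. Let $\hat{\bm r}=(\hat{\bm n},\hat{\bm m})$ with all entries positive and let $\hat\mu\in\mathcal M(\hat{\bm r})$ be an observed matching with $\hat\mu_{xy}>0$, $\hat\mu_{x0}>0$, $\hat\mu_{0y}>0$ for all $x,y$; let $\Phi$ be the (unique) surplus matrix for which $\hat\mu$ is the stable matching with margins $\hat{\bm r}$. Let $\hat\lambda=\hat\lambda^{MM}$ be the moment-matching estimator, $\hat\lambda\in\arg\max_{\lambda\in\mathbb R^K}\left(\sum_{x,y}\hat\mu_{xy}\Phi^\lambda_{xy}-\mathcal W(\Phi^\lambda,\hat{\bm r})\right)$, and $\mu^{\lambda}$ the stable matching for surplus $\Phi^\lambda$ and margins $\hat{\bm r}$. Then: 1. $C^k(\hat\mu)=C^k(\mu^{\hat\lambda})$ for all $k=1,\dots,K$; 2. $\hat\lambda$ is the vector of Lagrange multipliers of the comoment equality constraints in the program $$\mathcal E_{\max}(\hat\mu,\hat{\bm r})=\max_{\mu\in\mathcal M(\hat{\bm r})}\left\{\mathcal E(\mu,\hat{\bm r}):C^k(\mu)=C^k(\hat\mu)\ \forall k\right\};$$ 3. $\mathcal E_{\max}(\hat\mu,\hat{\bm r})=\mathcal E(\mu^{\hat\lambda},\hat{\bm r})$, and $\mathcal E(\hat\mu,\hat{\bm r})\le\mathcal E_{\max}(\hat\mu,\hat{\bm r})$, with equality if and only if there exists $\lambda$ such that $\Phi^\lambda=\Phi$.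
   Context: Setting. $\mathcal X,\mathcal Y$ finite sets of groups of men and women, $\mathcal X_0=\mathcal X\cup\{0\}$, $\mathcal Y_0=\mathcal Y\cup\{0\}$ ($0$ = singlehood), continuum populations with masses $\bm r=(\bm n,\bm m)$. Each man of group $x$ has a vector $\varepsilon\in\mathbb R^{\mathcal Y_0}$ distributed as $P_x$, each woman of group $y$ a vector $\eta\in\mathbb R^{\mathcal X_0}$ distributed as $Q_y$. Separability: for a surplus matrix $\Phi=(\Phi_{xy})$, the joint surplus of a match between man $i$ (group $x$) and woman $j$ (group $y$) is $\Phi_{xy}+\varepsilon_{iy}+\eta_{xj}$ and singles get $\varepsilon_{i0}$, $\eta_{0j}$; $\max_y|\varepsilon_y|$ and $\max_x|\eta_x|$ are integrable. Full support: each $P_x$, $Q_y$ has full support and is absolutely continuous with respect to Lebesgue measure. Utility is transferable; a group-level matching $\mu=(\mu_{xy})_{x\in\mathcal X,y\in\mathcal Y}$ records the masses of couples; $\mathcal M(\bm r)=\{\mu\ge0:\sum_y\mu_{xy}\le n_x,\ \sum_x\mu_{xy}\le m_y\}$. $G(\bm U,\bm n)=\sum_x n_x\mathbb E_{P_x}\max_{y\in\mathcal Y_0}(U_{xy}+\varepsilon_y)$ (with $U_{x0}=0$), $H(\bm V,\bm m)=\sum_ym_y\mathbb E_{Q_y}\max_{x\in\mathcal X_0}(V_{xy}+\eta_x)$ (with $V_{0y}=0$), $G^*(\mu,\bm n)=\sup_{\bm U}(\sum\mu_{xy}U_{xy}-G(\bm U,\bm n))$, $H^*(\mu,\bm m)=\sup_{\bm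 V}(\sum\mu_{xy}V_{xy}-H(\bm V,\bm m))$, and the generalized entropy is $\mathcal E(\mu,\bm r)=-G^*(\mu,\bm n)-H^*(\mu,\bm m)$. The social welfare is $\mathcal W(\Phi,\bm r)=\max_{\mu}\left(\sum_{x,y}\mu_{xy}\Phi_{xy}+\mathcal E(\mu,\bm r)\right)$, whose maximizer is the stable matching. Semilinear model: $\Phi^\lambda_{xy}=\sum_{k=1}^K\lambda_k\phi^k_{xy}$ for $\lambda\in\mathbb R^K$, where $\phi^1,\dots,\phi^K\in\mathbb R^{\mathcal X\times\mathcal Y}$ are known linearly independent basis surplus vectors. The comoments of a matching $\mu$ are $C^k(\mu)=\sum_{x,y}\mu_{xy}\phi^k_{xy}$. *)

theory Defs
  imports "HOL-Probability.Probability"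
begin

(* Groups of men: finite type 'x; groups of women: finite type 'y.
   X0 = 'x option, Y0 = 'y option, where None stands for singlehood (0).
   A man's taste vector epsilon lives in real^('y option), a woman's eta in real^('x option). *)

definition extU :: "('x \<Rightarrow> 'y \<Rightarrow> real) \<Rightarrow> 'x \<Rightarrow> 'y option \<Rightarrow> real" where
  "extU U x z = (case z of None \<Rightarrow> 0 | Some y \<Rightarrow> U x y)"

definition extV :: "('x \<Rightarrow> 'y \<Rightarrow> real) \<Rightarrow> 'y \<Rightarrow> 'x option \<Rightarrow> real" where
  "extV V y z = (case z of None \<Rightarrow> 0 | Some x \<Rightarrow> V x y)"

definition Gfun :: "('x::finite \<Rightarrow> (real^('y::finite option)) measure) \<Rightarrow>
    ('x \<Rightarrow> 'y \<Rightarrow> real) \<Rightarrow> ('x \<Rightarrow> real) \<Rightarrow> real" where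
  "Gfun P U n = (\<Sum>x\<in>UNIV. n x * (\<integral>e. Max (range (\<lambda>z. extU U x z + e $ z)) \<partial>(P x)))"

definition Hfun :: "('y::finite \<Rightarrow> (real^('x::finite option)) measure) \<Rightarrow>
    ('x \<Rightarrow> 'y \<Rightarrow> real) \<Rightarrow> ('y \<Rightarrow> real) \<Rightarrow> real" where
  "Hfun Q V m = (\<Sum>y\<in>UNIV. m y * (\<integral>e. Max (range (\<lambda>z. extV V y z + e $ z)) \<partial>(Q y)))"

definition total_surplus :: "('x::finite \<Rightarrow> 'y::finite \<Rightarrow> real) \<Rightarrow> ('x \<Rightarrow> 'y \<Rightarrow> real) \<Rightarrow> real" where
  "total_surplus \<mu> \<Phi> = (\<Sum>x\<in>UNIV. \<Sum>y\<in>UNIV. \<mu> x y * \<Phi> x y)"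

definition Gstar :: "('x::finite \<Rightarrow> (real^('y::finite option)) measure) \<Rightarrow>
    ('x \<Rightarrow> 'y \<Rightarrow> real) \<Rightarrow> ('x \<Rightarrow> real) \<Rightarrow> ereal" where
  "Gstar P \<mu> n = (SUP U. ereal (total_surplus \<mu> U - Gfun P U n))"

definition Hstar :: "('y::finite \<Rightarrow> (real^('x::finite option)) measure) \<Rightarrow>
    ('x \<Rightarrow> 'y \<Rightarrow> real) \<Rightarrow> ('y \<Rightarrow> real) \<Rightarrow> ereal" where
  "Hstar Q \<mu> m = (SUP V. ereal (total_surplus \<mu> V - Hfun Q V m))"

definition entropy :: "('x::finite \<Rightarrow> (real^('y::finite option)) measure) \<Rightarrow>
    ('y \<Rightarrow> (real^('x option)) measure) \<Rightarrow>
    ('x \<Rightarrow> 'y \<Rightarrow> real) \<Rightarrow> ('x \<Rightarrow> real) \<Rightarrow> ('y \<Rightarrow> real) \<Rightarrow> ereal" where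
  "entropy P Q \<mu> n m = - (Gstar P \<mu> n + Hstar Q \<mu> m)"

definition matchings :: "('x::finite \<Rightarrow> real) \<Rightarrow> ('y::finite \<Rightarrow> real) \<Rightarrow> ('x \<Rightarrow> 'y \<Rightarrow> real) set" where
  "matchings n m = {\<mu>. (\<forall>x y. 0 \<le> \<mu> x y) \<and> (\<forall>x. (\<Sum>y\<in>UNIV. \<mu> x y) \<le> n x)
                        \<and> (\<forall>y. (\<Sum>x\<in>UNIV. \<mu> x y) \<le> m y)}"

definition welfare :: "('x::finite \<Rightarrow> (real^('y::finite option)) measure) \<Rightarrow>
    ('y \<Rightarrow> (real^('x option)) measure) \<Rightarrow>
    ('x \<Rightarrow> 'y \<Rightarrow> real) \<Rightarrow> ('x \<Rightarrow> real) \<Rightarrow> ('y \<Rightarrow> real) \<Rightarrow> ereal" where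
  "welfare P Q \<Phi> n m = (SUP \<mu>\<in>matchings n m. ereal (total_surplus \<mu> \<Phi>) + entropy P Q \<mu> n m)"

definition stable_matching :: "('x::finite \<Rightarrow> (real^('y::finite option)) measure) \<Rightarrow>
    ('y \<Rightarrow> (real^('x option)) measure) \<Rightarrow>
    ('x \<Rightarrow> 'y \<Rightarrow> real) \<Rightarrow> ('x \<Rightarrow> real) \<Rightarrow> ('y \<Rightarrow> real) \<Rightarrow> ('x \<Rightarrow> 'y \<Rightarrow> real) \<Rightarrow> bool" where
  "stable_matching P Q \<Phi> n m \<mu> \<longleftrightarrow>
     \<mu> \<in> matchings n m \<and> ereal (total_surplus \<mu> \<Phi>) + entropy P Q \<mu> n m = welfare P Q \<Phi> n m"

definition Phi_lin :: "('k::finite \<Rightarrow> 'x \<Rightarrow> 'y \<Rightarrow> real) \<Rightarrow> ('k \<Rightarrow> real) \<Rightarrow> 'x \<Rightarrow> 'y \<Rightarrow> real" where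
  "Phi_lin phi lam = (\<lambda>x y. \<Sum>k\<in>UNIV. lam k * phi k x y)"

definition comoment :: "('k \<Rightarrow> 'x::finite \<Rightarrow> 'y::finite \<Rightarrow> real) \<Rightarrow> 'k \<Rightarrow> ('x \<Rightarrow> 'y \<Rightarrow> real) \<Rightarrow> real" where
  "comoment phi k \<mu> = (\<Sum>x\<in>UNIV. \<Sum>y\<in>UNIV. \<mu> x y * phi k x y)"

definition entropy_max :: "('x::finite \<Rightarrow> (real^('y::finite option)) measure) \<Rightarrow>
    ('y \<Rightarrow> (real^('x option)) measure) \<Rightarrow> ('k \<Rightarrow> 'x \<Rightarrow> 'y \<Rightarrow> real) \<Rightarrow>
    ('x \<Rightarrow> 'y \<Rightarrow> real) \<Rightarrow> ('x \<Rightarrow> real) \<Rightarrow> ('y \<Rightarrow> real) \<Rightarrow> ereal" where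
  "entropy_max P Q phi muhat n m =
     (SUP \<mu>\<in>{\<mu>\<in>matchings n m. \<forall>k. comoment phi k \<mu> = comoment phi k muhat}. entropy P Q \<mu> n m)"

(* lam is a vector of Lagrange multipliers for the comoment equality constraints:
   the optimal value equals the supremum of the Lagrangian
   E(mu) + sum_k lam_k (C^k(mu) - C^k(muhat)) over mu in M(r) (no duality gap, dual attained at lam). *)
definition is_lagrange_mult :: "('x::finite \<Rightarrow> (real^('y::finite option)) measure) \<Rightarrow>
    ('y \<Rightarrow> (real^('x option)) measure) \<Rightarrow> ('k::finite \<Rightarrow> 'x \<Rightarrow> 'y \<Rightarrow> real) \<Rightarrow>
    ('x \<Rightarrow> 'y \<Rightarrow> real) \<Rightarrow> ('x \<Rightarrow> real) \<Rightarrow> ('y \<Rightarrow> real) \<Rightarrow> ('k \<Rightarrow> real) \<Rightarrow> bool" where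
  "is_lagrange_mult P Q phi muhat n m lam \<longleftrightarrow>
     entropy_max P Q phi muhat n m =
       (SUP \<mu>\<in>matchings n m. entropy P Q \<mu> n m
          + ereal (\<Sum>k\<in>UNIV. lam k * (comoment phi k \<mu> - comoment phi k muhat)))"

definition MM_estimator :: "('x::finite \<Rightarrow> (real^('y::finite option)) measure) \<Rightarrow>
    ('y \<Rightarrow> (real^('x option)) measure) \<Rightarrow> ('k::finite \<Rightarrow> 'x \<Rightarrow> 'y \<Rightarrow> real) \<Rightarrow>
    ('x \<Rightarrow> 'y \<Rightarrow> real) \<Rightarrow> ('x \<Rightarrow> real) \<Rightarrow> ('y \<Rightarrow> real) \<Rightarrow> ('k \<Rightarrow> real) \<Rightarrow> bool" where
  "MM_estimator P Q phi muhat n m lam \<longleftrightarrow>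
     (\<forall>l. ereal (total_surplus muhat (Phi_lin phi l)) - welfare P Q (Phi_lin phi l) n m
          \<le> ereal (total_surplus muhat (Phi_lin phi lam)) - welfare P Q (Phi_lin phi lam) n m)"

definition full_support_ac :: "('a::euclidean_space) measure \<Rightarrow> bool" where
  "full_support_ac M \<longleftrightarrow> prob_space M \<and> sets M = sets borel \<and> absolutely_continuous lborel M
     \<and> (\<forall>U. open U \<and> U \<noteq> {} \<longrightarrow> 0 < emeasure M U)"

end

theory Submission
  imports Defs
begin

definition ext0 :: "('a \<Rightarrow> real) \<Rightarrow> 'a option \<Rightarrow> real" where
  "ext0 u z = (case z of None \<Rightarrow> 0 | Some a \<Rightarrow> u a)"

definition mx :: "('a::finite \<Rightarrow> real) \<Rightarrow> real^('a option) \<Rightarrow> real" where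
  "mx u e = Max (range (\<lambda>z. ext0 u z + e $ z))"

definition gg :: "(real^('a::finite option)) measure \<Rightarrow> ('a \<Rightarrow> real) \<Rightarrow> real" where
  "gg M u = (\<integral>e. mx u e \<partial>M)"

definition AA :: "('a::finite \<Rightarrow> real) \<Rightarrow> 'a option \<Rightarrow> (real^('a option)) set" where
  "AA u z = {e. \<forall>w. w \<noteq> z \<longrightarrow> ext0 u w + e $ w < ext0 u z + e $ z}"

definition pr :: "(real^('a::finite option)) measure \<Rightarrow> ('a \<Rightarrow> real) \<Rightarrow> 'a \<Rightarrow> real" where
  "pr M u a = measure M (AA u (Some a))"

definition L1 :: "('a::finite \<Rightarrow> real) \<Rightarrow> real" where
  "L1 u = (\<Sum>a\<in>UNIV. \<bar>u a\<bar>)"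

definition bnd :: "real^('a::finite option) \<Rightarrow> real" where
  "bnd e = Max (range (\<lambda>z. \<bar>e $ z\<bar>))"

definition good :: "(real^('a::finite option)) measure \<Rightarrow> bool" where
  "good M \<longleftrightarrow> full_support_ac M \<and> integrable M bnd"

lemma mx_ge: "ext0 u z + e $ z \<le> mx u e"
  unfolding mx_def by (rule Max_ge) auto

lemma mx_ex: "\<exists>z. mx u e = ext0 u z + e $ z"
proof -
  have "mx u e \<in> range (\<lambda>z. ext0 u z + e $ z)"
    unfolding mx_def by (rule Max_in) auto
  then show ?thesis by auto
qed

lemma bnd_ge: "\<bar>e $ z\<bar> \<le> bnd e"
  unfolding bnd_def by (rule Max_ge) auto

lemma ext0_diff: "\<bar>ext0 u z - ext0 u' z\<bar> \<le> L1 (\<lambda>a. u a - u' a)"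
proof (cases z)
  case None then show ?thesis by (simp add: ext0_def L1_def sum_nonneg)
next
  case (Some a) then show ?thesis
    unfolding ext0_def L1_def by (auto intro: member_le_sum[where f="\<lambda>a. \<bar>u a - u' a\<bar>"])
qed

lemma ext0_abs: "\<bar>ext0 u z\<bar> \<le> L1 u"
  using ext0_diff[of u z "\<lambda>_. 0"] by (simp add: ext0_def split: option.splits)

lemma mx_lip: "\<bar>mx u e - mx u' e\<bar> \<le> L1 (\<lambda>a. u a - u' a)"
proof -
  have "mx u e - mx u' e \<le> L1 (\<lambda>a. u a - u' a)" for u u'
  proof -
    obtain z where z: "mx u e = ext0 u z + e $ z" using mx_ex by blast
    have "ext0 u' z + e $ z \<le> mx u' e" by (rule mx_ge)
    moreover have "ext0 u z - ext0 u' z \<le> L1 (\<lambda>a. u a - u' a)" using ext0_diff[of u z u'] by linarith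
    ultimately show ?thesis using z by linarith
  qed
  from this[of u u'] this[of u' u] show ?thesis
    by (simp add: L1_def abs_minus_commute)
qed

lemma L1_nonneg: "0 \<le> L1 u"
  unfolding L1_def by (simp add: sum_nonneg)

lemma mx_abs: "\<bar>mx u e\<bar> \<le> L1 u + bnd e"
proof -
  obtain z where z: "mx u e = ext0 u z + e $ z" using mx_ex by blast
  have "ext0 u None + e $ None \<le> mx u e" by (rule mx_ge)
  then have "- bnd e \<le> mx u e" using bnd_ge[of e None] by (simp add: ext0_def)
  moreover have "mx u e \<le> L1 u + bnd e" using z ext0_abs[of u z] bnd_ge[of e z] by linarith
  ultimately show ?thesis using L1_nonneg[of u] by linarith
qed

lemma mx_meas[measurable]: "mx u \<in> borel_measurable borel"
  unfolding mx_def by measurable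

lemma bnd_meas[measurable]: "bnd \<in> borel_measurable borel"
  unfolding bnd_def by measurable

lemma AA_sets: "AA u z \<in> sets borel"
  unfolding AA_def by measurable

lemma good_prob: "good M \<Longrightarrow> prob_space M"
  unfolding good_def full_support_ac_def by auto

lemma good_sets: "good M \<Longrightarrow> sets M = sets borel"
  unfolding good_def full_support_ac_def by auto

lemma good_bnd: "good M \<Longrightarrow> integrable M bnd"
  unfolding good_def by auto

lemma meas_M: "good M \<Longrightarrow> f \<in> borel_measurable borel \<Longrightarrow> f \<in> borel_measurable M"
  using good_sets measurable_cong_sets by blast

lemma AA_sets_M: "good M \<Longrightarrow> AA u z \<in> sets M"
  using good_sets AA_sets by blast

lemma int_const: "good M \<Longrightarrow> integrable M (\<lambda>_. c::real)"
  using good_prob prob_space.finite_measure finite_measure.integrable_const by blast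

lemma mx_int: fixes M :: "(real^('a::finite option)) measure" and u :: "'a \<Rightarrow> real"
  assumes "good M" shows "integrable M (mx u)"
proof (rule Bochner_Integration.integrable_bound[where f="\<lambda>e. L1 u + bnd e"])
  show "integrable M (\<lambda>e. L1 u + bnd e)"
    using int_const[OF assms, of "L1 u"] good_bnd[OF assms] by (rule Bochner_Integration.integrable_add)
  show "mx u \<in> borel_measurable M" using meas_M[OF assms mx_meas] .
  show "AE e in M. norm (mx u e) \<le> norm (L1 u + bnd e)"
  proof (rule AE_I2)
    fix e :: "real^('a option)"
    have "0 \<le> bnd e" using bnd_ge[of e None] by linarith
    then show "norm (mx u e) \<le> norm (L1 u + bnd e)" using mx_abs[of u e] L1_nonneg[of u] by simp
  qed
qed

lemma gg_lip: fixes M :: "(real^('a::finite option)) measure" and u :: "'a \<Rightarrow> real"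
  assumes "good M" shows "\<bar>gg M u - gg M u'\<bar> \<le> L1 (\<lambda>a. u a - u' a)"
proof -
  have "gg M u - gg M u' = (\<integral>e. mx u e - mx u' e \<partial>M)"
    unfolding gg_def using mx_int[OF assms] by simp
  also have "\<bar>\<dots>\<bar> \<le> (\<integral>e. \<bar>mx u e - mx u' e\<bar> \<partial>M)"
    by (rule integral_abs_bound)
  also have "\<dots> \<le> (\<integral>e. L1 (\<lambda>a. u a - u' a) \<partial>M)"
    by (rule integral_mono) (use mx_int[OF assms] int_const[OF assms] mx_lip in auto)
  also have "\<dots> = L1 (\<lambda>a. u a - u' a)"
    using good_prob[OF assms] prob_space.prob_space by (simp add: prob_space.prob_space)
  finally show ?thesis .
qed

lemma hyper_null:
  assumes "good M" "a \<noteq> b"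
  shows "AE e in M. e $ a + c \<noteq> e $ b"
proof -
  let ?w = "axis a (1::real) - axis b 1"
  have w0: "?w \<noteq> 0"
    using assms(2) by (metis axis_eq_axis eq_iff_diff_eq_0 zero_neq_one)
  let ?H = "{e::real^('a option). ?w \<bullet> e = - c}"
  have "negligible ?H" using negligible_hyperplane w0 by blast
  then have "?H \<in> null_sets lebesgue" using negligible_iff_null_sets by blast
  moreover have "?H \<in> sets lborel" using closed_hyperplane by (simp add: borel_closed)
  ultimately have N: "?H \<in> null_sets lborel" using null_sets_completion_iff by blast
  have "AE e in lborel. e \<notin> ?H" using AE_not_in[OF N] .
  moreover have "\<And>e. e \<notin> ?H \<Longrightarrow> e $ a + c \<noteq> e $ b"
    by (auto simp: inner_diff_left inner_axis')
  ultimately have "AE e in lborel. e $ a + c \<noteq> e $ b" by (auto elim: AE_mp)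
  moreover have "absolutely_continuous lborel M" "sets M = sets lborel"
    using assms(1) unfolding good_def full_support_ac_def by auto
  ultimately show ?thesis using absolutely_continuous_AE by blast
qed

lemma AE_uniq: fixes M :: "(real^('a::finite option)) measure" and u :: "'a \<Rightarrow> real"
  assumes "good M" shows "AE e in M. \<exists>z. e \<in> AA u z"
proof -
  have "AE e in M. \<forall>p\<in>{p::'a option \<times> 'a option. fst p \<noteq> snd p}.
          e $ fst p + (ext0 u (fst p) - ext0 u (snd p)) \<noteq> e $ snd p"
    by (rule AE_finite_allI) (use hyper_null[OF assms] in auto)
  then show ?thesis
  proof (rule AE_mp, intro AE_I2 impI)
    fix e assume H: "\<forall>p\<in>{p::'a option \<times> 'a option. fst p \<noteq> snd p}.
          e $ fst p + (ext0 u (fst p) - ext0 u (snd p)) \<noteq> e $ snd p"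
    obtain z where z: "mx u e = ext0 u z + e $ z" using mx_ex by blast
    have "e \<in> AA u z"
      unfolding AA_def
    proof (intro CollectI allI impI)
      fix w assume "w \<noteq> z"
      then have "ext0 u w + e $ w \<noteq> ext0 u z + e $ z" using H[rule_format, of "(w,z)"] by auto
      moreover have "ext0 u w + e $ w \<le> ext0 u z + e $ z" using mx_ge[of u w e] z by simp
      ultimately show "ext0 u w + e $ w < ext0 u z + e $ z" by simp
    qed
    then show "\<exists>z. e \<in> AA u z" by blast
  qed
qed

lemma good_space: "good M \<Longrightarrow> space M = UNIV"
proof -
  assume "good M"
  then have "space M = space borel" using good_sets sets_eq_imp_space_eq by blast
  then show ?thesis by simp
qed

lemma ext0_lin: "ext0 (\<lambda>a. u a + t * v a) z = ext0 u z + t * ext0 v z"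
  by (simp add: ext0_def split: option.splits)

lemma L1_scale: "0 \<le> t \<Longrightarrow> L1 (\<lambda>a. t * v a) = t * L1 v"
  by (simp add: L1_def abs_mult sum_distrib_left)

lemma AA_disj: "e \<in> AA u z \<Longrightarrow> e \<in> AA u z' \<Longrightarrow> z = z'"
proof (rule ccontr)
  assume a: "e \<in> AA u z" "e \<in> AA u z'" "z \<noteq> z'"
  then have "ext0 u z + e $ z < ext0 u z' + e $ z'" "ext0 u z' + e $ z' < ext0 u z + e $ z"
    unfolding AA_def by auto
  then show False by simp
qed

lemma mx_stable:
  assumes e: "e \<in> AA u z" and t: "0 \<le> t"
    and gap: "\<forall>w. w \<noteq> z \<longrightarrow> ext0 u w + e $ w + 2 * t * L1 v < ext0 u z + e $ z"
  shows "mx (\<lambda>a. u a + t * v a) e = ext0 (\<lambda>a. u a + t * v a) z + e $ z"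
proof -
  obtain z' where z': "mx (\<lambda>a. u a + t * v a) e = ext0 (\<lambda>a. u a + t * v a) z' + e $ z'"
    using mx_ex by blast
  have ge: "ext0 (\<lambda>a. u a + t * v a) z + e $ z \<le> mx (\<lambda>a. u a + t * v a) e" by (rule mx_ge)
  show ?thesis
  proof (cases "z' = z")
    case True then show ?thesis using z' by simp
  next
    case False
    have a1: "\<bar>t * ext0 v z'\<bar> \<le> t * L1 v" using ext0_abs[of v z'] t by (simp add: abs_mult mult_left_mono)
    have a2: "\<bar>t * ext0 v z\<bar> \<le> t * L1 v" using ext0_abs[of v z] t by (simp add: abs_mult mult_left_mono)
    from gap False have "ext0 u z' + e $ z' + 2 * t * L1 v < ext0 u z + e $ z" by auto
    then have False using z' ge a1 a2 unfolding ext0_lin by linarith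
    then show ?thesis ..
  qed
qed

lemma mx_AA: assumes "e \<in> AA u z" shows "mx u e = ext0 u z + e $ z"
proof -
  obtain z' where z': "mx u e = ext0 u z' + e $ z'" using mx_ex by blast
  have le: "ext0 u z + e $ z \<le> mx u e" by (rule mx_ge)
  have "z' = z"
  proof (rule ccontr)
    assume "z' \<noteq> z"
    then have "ext0 u z' + e $ z' < ext0 u z + e $ z" using assms unfolding AA_def by auto
    then show False using le z' by simp
  qed
  then show ?thesis using z' by simp
qed

definition tt :: "nat \<Rightarrow> real" where "tt n = 1 / real (Suc n)"

lemma tt_pos: "0 < tt n" unfolding tt_def by simp

lemma tt_lim: "tt \<longlonglongrightarrow> 0"
  unfolding tt_def using LIMSEQ_inverse_real_of_nat by (simp add: inverse_eq_divide)

lemma gg_deriv: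
  fixes M :: "(real^('a::finite option)) measure" and u v :: "'a \<Rightarrow> real"
  assumes g: "good M"
  shows "(\<lambda>n. (gg M (\<lambda>a. u a + tt n * v a) - gg M u) / tt n) \<longlonglongrightarrow> (\<Sum>a\<in>UNIV. v a * pr M u a)"
proof -
  define s where "s n e = (mx (\<lambda>a. u a + tt n * v a) e - mx u e) / tt n" for n e
  define f where "f e = (\<Sum>a\<in>UNIV. v a * indicator (AA u (Some a)) e)" for e :: "real^('a option)"
  have eq: "(gg M (\<lambda>a. u a + tt n * v a) - gg M u) / tt n = (\<integral>e. s n e \<partial>M)" for n
    unfolding gg_def s_def using mx_int[OF g] by simp
  have fin: "emeasure M (AA u (Some a)) < \<infinity>" for a
    using finite_measure.emeasure_finite[OF prob_space.finite_measure[OF good_prob[OF g]]] by (simp add: less_top)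
  have intf: "(\<integral>e. f e \<partial>M) = (\<Sum>a\<in>UNIV. v a * pr M u a)"
  proof -
    have "(\<integral>e. f e \<partial>M) = (\<Sum>a\<in>UNIV. \<integral>e. v a * indicator (AA u (Some a)) e \<partial>M)"
      unfolding f_def by (rule Bochner_Integration.integral_sum) (use AA_sets_M[OF g] fin in auto)
    also have "\<dots> = (\<Sum>a\<in>UNIV. v a * pr M u a)"
      unfolding pr_def using good_space[OF g] by simp
    finally show ?thesis .
  qed
  have meas_s: "s n \<in> borel_measurable M" for n
    unfolding s_def by (rule meas_M[OF g]) measurable
  have meas_f: "f \<in> borel_measurable M"
    unfolding f_def using AA_sets_M[OF g] by measurable
  have bound: "AE e in M. norm (s n e) \<le> L1 v" for n
  proof (rule AE_I2)
    fix e
    have "\<bar>mx (\<lambda>a. u a + tt n * v a) e - mx u e\<bar> \<le> tt n * L1 v"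
      using mx_lip[of "\<lambda>a. u a + tt n * v a" e u] L1_scale[of "tt n" v] tt_pos[of n] by simp
    then show "norm (s n e) \<le> L1 v" unfolding s_def using tt_pos[of n]
      by (simp add: divide_le_eq mult.commute)
  qed
  have lim: "AE e in M. (\<lambda>n. s n e) \<longlonglongrightarrow> f e"
    using AE_uniq[OF g, of u]
  proof (rule AE_mp, intro AE_I2 impI)
    fix e assume "\<exists>z. e \<in> AA u z"
    then obtain z where z: "e \<in> AA u z" by blast
    have fe: "f e = ext0 v z"
    proof (cases z)
      case None
      have "\<And>a. e \<notin> AA u (Some a)" using AA_disj[OF z] None by blast
      then show ?thesis unfolding f_def using None by (simp add: ext0_def)
    next
      case (Some b)
      have "\<And>a. a \<noteq> b \<Longrightarrow> e \<notin> AA u (Some a)" using AA_disj[OF z] Some by blast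
      then have "f e = (\<Sum>a\<in>UNIV. if a = b then v a else 0)"
        unfolding f_def using z Some by (intro sum.cong) (auto simp: indicator_def)
      then show ?thesis using Some by (simp add: ext0_def)
    qed
    have ev: "eventually (\<lambda>n. \<forall>w. w \<noteq> z \<longrightarrow> ext0 u w + e $ w + 2 * tt n * L1 v < ext0 u z + e $ z) sequentially"
    proof (rule eventually_all_finite)
      fix w
      show "eventually (\<lambda>n. w \<noteq> z \<longrightarrow> ext0 u w + e $ w + 2 * tt n * L1 v < ext0 u z + e $ z) sequentially"
      proof (cases "w = z")
        case True then show ?thesis by simp
      next
        case False
        then have gp: "0 < ext0 u z + e $ z - (ext0 u w + e $ w)" using z unfolding AA_def by auto
        have "(\<lambda>n. 2 * tt n * L1 v) \<longlonglongrightarrow> 2 * 0 * L1 v"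
          by (intro tendsto_intros tt_lim)
        then have "eventually (\<lambda>n. 2 * tt n * L1 v < ext0 u z + e $ z - (ext0 u w + e $ w)) sequentially"
          using gp by (simp add: order_tendstoD(2))
        then show ?thesis by eventually_elim auto
      qed
    qed
    have "eventually (\<lambda>n. s n e = f e) sequentially"
      using ev
    proof eventually_elim
      case (elim n)
      have "mx (\<lambda>a. u a + tt n * v a) e = ext0 u z + tt n * ext0 v z + e $ z"
        using mx_stable[OF z less_imp_le[OF tt_pos[of n]] elim] ext0_lin by simp
      moreover have "mx u e = ext0 u z + e $ z"
        by (rule mx_AA[OF z])
      ultimately show ?case unfolding s_def fe using tt_pos[of n] by simp
    qed
    then show "(\<lambda>n. s n e) \<longlonglongrightarrow> f e" by (rule tendsto_eventually)
  qed
  have "(\<lambda>n. \<integral>e. s n e \<partial>M) \<longlonglongrightarrow> (\<integral>e. f e \<partial>M)"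
    by (rule integral_dominated_convergence[OF meas_f meas_s int_const[OF g] lim bound])
  then show ?thesis unfolding eq intf .
qed

lemma ext0_comb: "ext0 (\<lambda>a. (1 - s) * u a + s * u' a) z = (1 - s) * ext0 u z + s * ext0 u' z"
  by (simp add: ext0_def split: option.splits)

lemma mx_convex:
  assumes "0 \<le> s" "s \<le> 1"
  shows "mx (\<lambda>a. (1 - s) * u a + s * u' a) e \<le> (1 - s) * mx u e + s * mx u' e"
proof -
  obtain z where z: "mx (\<lambda>a. (1 - s) * u a + s * u' a) e = ext0 (\<lambda>a. (1 - s) * u a + s * u' a) z + e $ z"
    using mx_ex by blast
  have "(1 - s) * (ext0 u z + e $ z) \<le> (1 - s) * mx u e"
    using assms mx_ge[of u z e] by (intro mult_left_mono) auto
  moreover have "s * (ext0 u' z + e $ z) \<le> s * mx u' e"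
    using assms mx_ge[of u' z e] by (intro mult_left_mono) auto
  ultimately show ?thesis using z unfolding ext0_comb by (simp add: algebra_simps)
qed

lemma gg_convex:
  fixes M :: "(real^('a::finite option)) measure" and u u' :: "'a \<Rightarrow> real"
  assumes g: "good M" and s: "0 \<le> s" "s \<le> 1"
  shows "gg M (\<lambda>a. (1 - s) * u a + s * u' a) \<le> (1 - s) * gg M u + s * gg M u'"
proof -
  have "gg M (\<lambda>a. (1 - s) * u a + s * u' a) \<le> (\<integral>e. (1 - s) * mx u e + s * mx u' e \<partial>M)"
    unfolding gg_def
    by (rule integral_mono) (use mx_int[OF g] mx_convex[OF s] in auto)
  also have "\<dots> = (1 - s) * gg M u + s * gg M u'"
    unfolding gg_def using mx_int[OF g] by simp
  finally show ?thesis .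
qed

lemma gg_grad_ineq:
  fixes M :: "(real^('a::finite option)) measure" and u u' :: "'a \<Rightarrow> real"
  assumes g: "good M"
  shows "(\<Sum>a\<in>UNIV. (u' a - u a) * pr M u a) \<le> gg M u' - gg M u"
proof (rule LIMSEQ_le_const2[OF gg_deriv[OF g, of u "\<lambda>a. u' a - u a"]], intro exI allI impI)
  fix n :: nat
  have t: "0 < tt n" "tt n \<le> 1" using tt_pos[of n] by (auto simp: tt_def)
  have "(\<lambda>a. u a + tt n * (u' a - u a)) = (\<lambda>a. (1 - tt n) * u a + tt n * u' a)"
    by (auto simp: algebra_simps)
  then have "gg M (\<lambda>a. u a + tt n * (u' a - u a)) \<le> (1 - tt n) * gg M u + tt n * gg M u'"
    using gg_convex[OF g, of "tt n" u u'] t by simp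
  then have "gg M (\<lambda>a. u a + tt n * (u' a - u a)) - gg M u \<le> tt n * (gg M u' - gg M u)"
    by (simp add: algebra_simps)
  then show "(gg M (\<lambda>a. u a + tt n * (u' a - u a)) - gg M u) / tt n \<le> gg M u' - gg M u"
    using t by (simp add: divide_le_eq mult.commute)
qed

lemma pr_nonneg: "0 \<le> pr M u a"
  unfolding pr_def by simp

lemma mx_shift: "0 \<le> t \<Longrightarrow> mx (\<lambda>a. u a + t * 1) e \<le> mx u e + t"
proof -
  assume t: "0 \<le> t"
  obtain z where z: "mx (\<lambda>a. u a + t * 1) e = ext0 (\<lambda>a. u a + t * 1) z + e $ z" using mx_ex by blast
  have "ext0 (\<lambda>_. 1::real) z \<le> 1" by (simp add: ext0_def split: option.splits)
  then have "t * ext0 (\<lambda>_. 1::real) z \<le> t" using t by (simp add: mult_left_le)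
  then show ?thesis using z mx_ge[of u z e] unfolding ext0_lin by linarith
qed

lemma pr_sum_le1:
  fixes M :: "(real^('a::finite option)) measure" and u :: "'a \<Rightarrow> real"
  assumes g: "good M"
  shows "(\<Sum>a\<in>UNIV. pr M u a) \<le> 1"
proof -
  have "(\<Sum>a\<in>UNIV. 1 * pr M u a) \<le> 1"
  proof (rule LIMSEQ_le_const2[OF gg_deriv[OF g, of u "\<lambda>_. 1"]], intro exI allI impI)
    fix n :: nat
    have t: "0 < tt n" using tt_pos[of n] by auto
    have "gg M (\<lambda>a. u a + tt n * 1) \<le> (\<integral>e. mx u e + tt n \<partial>M)"
      unfolding gg_def
      by (rule integral_mono) (use mx_int[OF g] int_const[OF g] mx_shift[of "tt n"] t in auto)
    also have "\<dots> = gg M u + tt n"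
      unfolding gg_def using mx_int[OF g] int_const[OF g] prob_space.prob_space[OF good_prob[OF g]] by simp
    finally show "(gg M (\<lambda>a. u a + tt n * 1) - gg M u) / tt n \<le> 1"
      using t by (simp add: divide_le_eq)
  qed
  then show ?thesis by simp
qed

lemma open_all_less:
  fixes f g :: "'i::finite \<Rightarrow> 'b::topological_space \<Rightarrow> real"
  assumes "\<And>i. continuous_on UNIV (f i)" "\<And>i. continuous_on UNIV (g i)"
  shows "open {x. \<forall>i. f i x < g i x}"
proof -
  have "{x. \<forall>i. f i x < g i x} = (\<Inter>i\<in>UNIV. {x. f i x < g i x})" by auto
  then show ?thesis by (auto intro!: open_INT open_Collect_less assms)
qed

lemma pr_strict:
  fixes M :: "(real^('a::finite option)) measure" and u u' :: "'a \<Rightarrow> real"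
  assumes g: "good M" and pos: "u y1 < u' y1"
  shows "\<exists>y. pr M u y < pr M u' y"
proof -
  define d where "d z = ext0 u' z - ext0 u z" for z
  define Mx where "Mx = Max (range d)"
  have dle: "d z \<le> Mx" for z unfolding Mx_def by (rule Max_ge) auto
  have "Mx \<in> range d" unfolding Mx_def by (rule Max_in) auto
  then obtain z0 where z0: "d z0 = Mx" by auto
  have Mpos: "0 < Mx" using dle[of "Some y1"] pos by (simp add: d_def ext0_def)
  have "z0 \<noteq> None" using z0 Mpos by (cases z0) (auto simp: d_def ext0_def)
  then obtain y0 where y0: "z0 = Some y0" by auto
  have incl: "AA u z0 \<subseteq> AA u' z0"
  proof
    fix e assume e: "e \<in> AA u z0"
    show "e \<in> AA u' z0" unfolding AA_def
    proof (intro CollectI allI impI)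
      fix w assume "w \<noteq> z0"
      then have "ext0 u w + e $ w < ext0 u z0 + e $ z0" using e unfolding AA_def by auto
      then show "ext0 u' w + e $ w < ext0 u' z0 + e $ z0" using dle[of w] z0 unfolding d_def by linarith
    qed
  qed
  define O1 where "O1 = {e::real^('a option). \<forall>w. (if w = z0 then 0 else ext0 u' w + e $ w - ext0 u' z0 - e $ z0) < (if w = z0 then 1 else (0::real))}"
  define O2 where "O2 = {e::real^('a option). ext0 u z0 + e $ z0 < e $ None}"
  have openO: "open (O1 \<inter> O2)"
    unfolding O1_def O2_def
  proof (intro open_Int open_all_less open_Collect_less)
    fix w :: "'a option"
    show "continuous_on UNIV (\<lambda>e::real^('a option). if w = z0 then 0 else ext0 u' w + e $ w - ext0 u' z0 - e $ z0)"
      by (cases "w = z0") (auto intro!: continuous_intros)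
    show "continuous_on UNIV (\<lambda>e::real^('a option). if w = z0 then 1 else (0::real))"
      by (cases "w = z0") (auto intro!: continuous_intros)
  qed (auto intro!: continuous_intros)
  define K where "K = L1 u + L1 u' + 1"
  define e0 :: "real^('a option)" where "e0 = (\<chi> w. if w = None then 0 else if w = z0 then - ext0 u z0 - Mx / 2 else - K)"
  have "e0 \<in> O1 \<inter> O2"
  proof
    show "e0 \<in> O2" unfolding O2_def e0_def using Mpos by (simp add: y0)
    show "e0 \<in> O1" unfolding O1_def
    proof (intro CollectI allI)
      fix w :: "'a option"
      have z0v: "ext0 u' z0 + e0 $ z0 = Mx / 2" using z0 unfolding e0_def d_def by (simp add: y0)
      show "(if w = z0 then 0 else ext0 u' w + e0 $ w - ext0 u' z0 - e0 $ z0) < (if w = z0 then 1 else (0::real))"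
      proof (cases "w = z0")
        case True then show ?thesis by simp
      next
        case False
        show ?thesis
        proof (cases "w = None")
          case True then show ?thesis using False z0v Mpos by (simp add: e0_def ext0_def y0)
        next
          case False2: False
          have "ext0 u' w \<le> L1 u'" using ext0_abs[of u' w] by simp
          moreover have "e0 $ w = - K" using False False2 unfolding e0_def by (simp del: not_None_eq)
          ultimately show ?thesis using False z0v Mpos L1_nonneg[of u] unfolding K_def by simp
        qed
      qed
    qed
  qed
  then have "O1 \<inter> O2 \<noteq> {}" by blast
  then have "0 < emeasure M (O1 \<inter> O2)"
    using g openO unfolding good_def full_support_ac_def by blast
  interpret fm: finite_measure M using prob_space.finite_measure[OF good_prob[OF g]] .
  have Osets: "O1 \<inter> O2 \<in> sets M" using good_sets[OF g] openO by (simp add: borel_open)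
  have Opos: "0 < measure M (O1 \<inter> O2)"
    using \<open>0 < emeasure M (O1 \<inter> O2)\<close> by (simp add: fm.emeasure_eq_measure)
  have disj: "AA u z0 \<inter> (O1 \<inter> O2) = {}"
  proof (safe)
    fix e assume "e \<in> AA u z0" "e \<in> O2"
    then show "e \<in> {}" unfolding AA_def O2_def y0
      by (auto dest!: spec[of _ None] simp: ext0_def)
  qed
  have O1sub: "O1 \<inter> O2 \<subseteq> AA u' z0"
  proof
    fix e assume "e \<in> O1 \<inter> O2"
    then have H: "\<forall>w. (if w = z0 then 0 else ext0 u' w + e $ w - ext0 u' z0 - e $ z0) < (if w = z0 then 1 else (0::real))"
      unfolding O1_def by auto
    have "\<forall>w. w \<noteq> z0 \<longrightarrow> ext0 u' w + e $ w < ext0 u' z0 + e $ z0"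
    proof (intro allI impI)
      fix w assume "w \<noteq> z0" then show "ext0 u' w + e $ w < ext0 u' z0 + e $ z0" using H[rule_format, of w] by simp
    qed
    then show "e \<in> AA u' z0" unfolding AA_def by auto
  qed
  have "measure M (AA u z0 \<union> (O1 \<inter> O2)) = measure M (AA u z0) + measure M (O1 \<inter> O2)"
    by (rule fm.finite_measure_Union[OF AA_sets_M[OF g] Osets disj])
  moreover have "measure M (AA u z0 \<union> (O1 \<inter> O2)) \<le> measure M (AA u' z0)"
    by (rule fm.finite_measure_mono) (use incl O1sub AA_sets_M[OF g] in auto)
  ultimately have "measure M (AA u z0) < measure M (AA u' z0)" using Opos by linarith
  then show ?thesis unfolding pr_def y0 by blast
qed

lemma pr_inj:
  fixes M :: "(real^('a::finite option)) measure" and u u' :: "'a \<Rightarrow> real"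
  assumes g: "good M" and eq: "\<And>a. pr M u a = pr M u' a"
  shows "u = u'"
proof (rule ccontr)
  assume "u \<noteq> u'"
  then obtain a where "u a \<noteq> u' a" by auto
  then have "u a < u' a \<or> u' a < u a" by auto
  then show False
  proof
    assume "u a < u' a" then obtain y where "pr M u y < pr M u' y" using pr_strict[OF g] by blast
    then show False using eq by simp
  next
    assume "u' a < u a" then obtain y where "pr M u' y < pr M u y" using pr_strict[OF g] by blast
    then show False using eq by simp
  qed
qed


lemma Gfun_eq: "Gfun P U n = (\<Sum>x\<in>UNIV. n x * gg (P x) (U x))"
proof -
  have "extU U x = ext0 (U x)" for x by (rule ext) (simp add: extU_def ext0_def)
  then show ?thesis unfolding Gfun_def gg_def mx_def by simp
qed

lemma Hfun_eq: "Hfun Q V m = (\<Sum>y\<in>UNIV. m y * gg (Q y) (\<lambda>x. V x y))"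
proof -
  have "extV V y = ext0 (\<lambda>x. V x y)" for y by (rule ext) (simp add: extV_def ext0_def)
  then show ?thesis unfolding Hfun_def gg_def mx_def by simp
qed

lemma ts_add: "total_surplus \<mu> (\<lambda>x y. U x y + V x y) = total_surplus \<mu> U + total_surplus \<mu> V"
  unfolding total_surplus_def by (simp add: algebra_simps sum.distrib)

lemma ts_diff1: "total_surplus (\<lambda>x y. a x y - b x y) D = total_surplus a D - total_surplus b D"
  unfolding total_surplus_def by (simp add: algebra_simps sum_subtractf)

lemma ts_diff2: "total_surplus \<mu> (\<lambda>x y. U x y - V x y) = total_surplus \<mu> U - total_surplus \<mu> V"
  unfolding total_surplus_def by (simp add: algebra_simps sum_subtractf)

lemma ts_scale: "total_surplus \<mu> (\<lambda>x y. t * D x y) = t * total_surplus \<mu> D"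
  unfolding total_surplus_def by (simp add: algebra_simps sum_distrib_left)

lemma ts_neg: "total_surplus \<mu> (\<lambda>x y. - D x y) = - total_surplus \<mu> D"
  unfolding total_surplus_def by (simp add: sum_negf)

lemma ts_self_zero:
  fixes p :: "'x::finite \<Rightarrow> 'y::finite \<Rightarrow> real"
  assumes "total_surplus p p = 0" shows "p = (\<lambda>x y. 0)"
proof -
  have "(\<Sum>x\<in>UNIV. \<Sum>y\<in>UNIV. p x y * p x y) = 0" using assms unfolding total_surplus_def .
  then have "\<forall>x\<in>UNIV. (\<Sum>y\<in>UNIV. p x y * p x y) = 0"
    by (subst sum_nonneg_eq_0_iff[symmetric]) (auto intro: sum_nonneg)
  then have "\<forall>x y. p x y * p x y = 0"
    by (auto simp: sum_nonneg_eq_0_iff)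
  then show ?thesis by (auto intro!: ext)
qed

lemma foc:
  fixes f :: "('x::finite \<Rightarrow> 'y::finite \<Rightarrow> real) \<Rightarrow> real"
  assumes der: "\<And>D. (\<lambda>k. (f (\<lambda>x y. U x y + tt k * D x y) - f U) / tt k) \<longlonglongrightarrow> total_surplus p D"
    and ge: "\<And>D k. tt k * total_surplus q D \<le> f (\<lambda>x y. U x y + tt k * D x y) - f U"
  shows "p = q"
proof -
  have le: "total_surplus q D \<le> total_surplus p D" for D
  proof (rule LIMSEQ_le_const[OF der], intro exI allI impI)
    fix k :: nat
    show "total_surplus q D \<le> (f (\<lambda>x y. U x y + tt k * D x y) - f U) / tt k"
      using ge[of k D] tt_pos[of k] by (simp add: le_divide_eq mult.commute)
  qed
  have "total_surplus q D = total_surplus p D" for D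
    using le[of D] le[of "\<lambda>x y. - D x y"] by (simp add: ts_neg)
  then have "total_surplus (\<lambda>x y. p x y - q x y) D = 0" for D by (simp add: ts_diff1)
  then have "total_surplus (\<lambda>x y. p x y - q x y) (\<lambda>x y. p x y - q x y) = 0" .
  then have "(\<lambda>x y. p x y - q x y) = (\<lambda>x y. 0)" by (rule ts_self_zero)
  then have "\<And>x y. p x y - q x y = 0" by meson
  then show ?thesis by (auto intro!: ext)
qed

lemma gg_lower:
  fixes M :: "(real^('a::finite option)) measure"
  assumes g: "good M"
  shows "ext0 u z - (\<integral>e. bnd e \<partial>M) \<le> gg M u"
proof -
  have "(\<integral>e. ext0 u z - bnd e \<partial>M) \<le> gg M u"
    unfolding gg_def
  proof (rule integral_mono)
    show "integrable M (\<lambda>e. ext0 u z - bnd e)" using int_const[OF g] good_bnd[OF g] by simp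
    show "integrable M (mx u)" by (rule mx_int[OF g])
    fix e show "ext0 u z - bnd e \<le> mx u e" using mx_ge[of u z e] bnd_ge[of e z] by linarith
  qed
  then show ?thesis using int_const[OF g] good_bnd[OF g] prob_space.prob_space[OF good_prob[OF g]] by simp
qed

lemma bnd_int_nonneg: "0 \<le> (\<integral>e. bnd e \<partial>M)"
  by (rule integral_nonneg_AE) (use bnd_ge[of _ None] in \<open>auto intro!: AE_I2 order_trans[OF abs_ge_zero]\<close>)

locale mkt =
  fixes P :: "'x::finite \<Rightarrow> (real^('y::finite option)) measure"
    and Q :: "'y \<Rightarrow> (real^('x option)) measure"
    and n :: "'x \<Rightarrow> real" and m :: "'y \<Rightarrow> real"
  assumes gP: "\<And>x. good (P x)" and gQ: "\<And>y. good (Q y)"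
    and npos: "\<And>x. 0 < n x" and mpos: "\<And>y. 0 < m y"
begin

abbreviation "G U \<equiv> Gfun P U n"
abbreviation "H V \<equiv> Hfun Q V m"

definition gradG :: "('x \<Rightarrow> 'y \<Rightarrow> real) \<Rightarrow> 'x \<Rightarrow> 'y \<Rightarrow> real" where
  "gradG U x y = n x * pr (P x) (U x) y"

definition gradH :: "('x \<Rightarrow> 'y \<Rightarrow> real) \<Rightarrow> 'x \<Rightarrow> 'y \<Rightarrow> real" where
  "gradH V x y = m y * pr (Q y) (\<lambda>x. V x y) x"

lemma G_deriv: "(\<lambda>k. (G (\<lambda>x y. U x y + tt k * D x y) - G U) / tt k) \<longlonglongrightarrow> total_surplus (gradG U) D"
proof -
  have eq: "(G (\<lambda>x y. U x y + tt k * D x y) - G U) / tt k =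
     (\<Sum>x\<in>UNIV. n x * ((gg (P x) (\<lambda>y. U x y + tt k * D x y) - gg (P x) (U x)) / tt k))" for k
    unfolding Gfun_eq by (simp add: sum_subtractf sum_divide_distrib algebra_simps diff_divide_distrib)
  have "(\<lambda>k. \<Sum>x\<in>UNIV. n x * ((gg (P x) (\<lambda>y. U x y + tt k * D x y) - gg (P x) (U x)) / tt k))
     \<longlonglongrightarrow> (\<Sum>x\<in>UNIV. n x * (\<Sum>y\<in>UNIV. D x y * pr (P x) (U x) y))"
    by (intro tendsto_intros gg_deriv gP)
  moreover have "(\<Sum>x\<in>UNIV. n x * (\<Sum>y\<in>UNIV. D x y * pr (P x) (U x) y)) = total_surplus (gradG U) D"
    unfolding total_surplus_def gradG_def by (simp add: sum_distrib_left algebra_simps)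
  ultimately show ?thesis unfolding eq by simp
qed

lemma H_deriv: "(\<lambda>k. (H (\<lambda>x y. V x y + tt k * D x y) - H V) / tt k) \<longlonglongrightarrow> total_surplus (gradH V) D"
proof -
  have eq: "(H (\<lambda>x y. V x y + tt k * D x y) - H V) / tt k =
     (\<Sum>y\<in>UNIV. m y * ((gg (Q y) (\<lambda>x. V x y + tt k * D x y) - gg (Q y) (\<lambda>x. V x y)) / tt k))" for k
    unfolding Hfun_eq by (simp add: sum_subtractf sum_divide_distrib algebra_simps diff_divide_distrib)
  have "(\<lambda>k. \<Sum>y\<in>UNIV. m y * ((gg (Q y) (\<lambda>x. V x y + tt k * D x y) - gg (Q y) (\<lambda>x. V x y)) / tt k))
     \<longlonglongrightarrow> (\<Sum>y\<in>UNIV. m y * (\<Sum>x\<in>UNIV. D x y * pr (Q y) (\<lambda>x. V x y) x))"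
    by (intro tendsto_intros gg_deriv gQ)
  moreover have "(\<Sum>y\<in>UNIV. m y * (\<Sum>x\<in>UNIV. D x y * pr (Q y) (\<lambda>x. V x y) x)) = total_surplus (gradH V) D"
    unfolding total_surplus_def gradH_def by (subst sum.swap) (simp add: sum_distrib_left algebra_simps)
  ultimately show ?thesis unfolding eq by simp
qed

lemma G_grad_ineq: "total_surplus (gradG U) (\<lambda>x y. U' x y - U x y) \<le> G U' - G U"
proof -
  have "total_surplus (gradG U) (\<lambda>x y. U' x y - U x y) = (\<Sum>x\<in>UNIV. n x * (\<Sum>y\<in>UNIV. (U' x y - U x y) * pr (P x) (U x) y))"
    unfolding total_surplus_def gradG_def by (simp add: sum_distrib_left algebra_simps)
  also have "\<dots> \<le> (\<Sum>x\<in>UNIV. n x * (gg (P x) (U' x) - gg (P x) (U x)))"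
    by (intro sum_mono mult_left_mono gg_grad_ineq gP) (use npos in \<open>auto intro: less_imp_le\<close>)
  also have "\<dots> = G U' - G U" unfolding Gfun_eq by (simp add: sum_subtractf algebra_simps)
  finally show ?thesis .
qed

lemma H_grad_ineq: "total_surplus (gradH V) (\<lambda>x y. V' x y - V x y) \<le> H V' - H V"
proof -
  have "total_surplus (gradH V) (\<lambda>x y. V' x y - V x y) = (\<Sum>y\<in>UNIV. m y * (\<Sum>x\<in>UNIV. (V' x y - V x y) * pr (Q y) (\<lambda>x. V x y) x))"
    unfolding total_surplus_def gradH_def by (subst sum.swap) (simp add: sum_distrib_left algebra_simps)
  also have "\<dots> \<le> (\<Sum>y\<in>UNIV. m y * (gg (Q y) (\<lambda>x. V' x y) - gg (Q y) (\<lambda>x. V x y)))"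
    by (intro sum_mono mult_left_mono gg_grad_ineq gQ) (use mpos in \<open>auto intro: less_imp_le\<close>)
  also have "\<dots> = H V' - H V" unfolding Hfun_eq by (simp add: sum_subtractf algebra_simps)
  finally show ?thesis .
qed

definition cG :: real where "cG = (\<Sum>x\<in>UNIV. n x * (\<integral>e. bnd e \<partial>(P x)))"
definition cH :: real where "cH = (\<Sum>y\<in>UNIV. m y * (\<integral>e. bnd e \<partial>(Q y)))"

lemma G_lower: "n x0 * (if b then U x0 y0 else 0) - cG \<le> G U"
proof -
  have "(\<Sum>x\<in>UNIV. n x * ((if x = x0 \<and> b then U x0 y0 else 0) - (\<integral>e. bnd e \<partial>(P x))))
      \<le> (\<Sum>x\<in>UNIV. n x * gg (P x) (U x))"
  proof (intro sum_mono mult_left_mono)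
    fix x
    show "0 \<le> n x" using npos[of x] by simp
    have "ext0 (U x) (if x = x0 \<and> b then Some y0 else None) - (\<integral>e. bnd e \<partial>(P x)) \<le> gg (P x) (U x)"
      by (rule gg_lower[OF gP])
    then show "(if x = x0 \<and> b then U x0 y0 else 0) - (\<integral>e. bnd e \<partial>(P x)) \<le> gg (P x) (U x)"
      by (auto simp: ext0_def split: if_splits)
  qed
  moreover have "(\<Sum>x\<in>UNIV. n x * ((if x = x0 \<and> b then U x0 y0 else 0) - (\<integral>e. bnd e \<partial>(P x))))
     = n x0 * (if b then U x0 y0 else 0) - cG"
    unfolding cG_def by (simp add: right_diff_distrib sum_subtractf if_distrib[of "\<lambda>t. n _ * t"] sum.delta cong: if_cong)
  ultimately show ?thesis unfolding Gfun_eq by simp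
qed

lemma H_lower: "m y0 * (if b then V x0 y0 else 0) - cH \<le> H V"
proof -
  have "(\<Sum>y\<in>UNIV. m y * ((if y = y0 \<and> b then V x0 y0 else 0) - (\<integral>e. bnd e \<partial>(Q y))))
      \<le> (\<Sum>y\<in>UNIV. m y * gg (Q y) (\<lambda>x. V x y))"
  proof (intro sum_mono mult_left_mono)
    fix y
    show "0 \<le> m y" using mpos[of y] by simp
    have "ext0 (\<lambda>x. V x y) (if y = y0 \<and> b then Some x0 else None) - (\<integral>e. bnd e \<partial>(Q y)) \<le> gg (Q y) (\<lambda>x. V x y)"
      by (rule gg_lower[OF gQ])
    then show "(if y = y0 \<and> b then V x0 y0 else 0) - (\<integral>e. bnd e \<partial>(Q y)) \<le> gg (Q y) (\<lambda>x. V x y)"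
      by (auto simp: ext0_def split: if_splits)
  qed
  moreover have "(\<Sum>y\<in>UNIV. m y * ((if y = y0 \<and> b then V x0 y0 else 0) - (\<integral>e. bnd e \<partial>(Q y))))
     = m y0 * (if b then V x0 y0 else 0) - cH"
    unfolding cH_def by (simp add: right_diff_distrib sum_subtractf if_distrib[of "\<lambda>t. m _ * t"] sum.delta cong: if_cong)
  ultimately show ?thesis unfolding Hfun_eq by simp
qed

lemma G_lip: "\<bar>G U - G U'\<bar> \<le> (\<Sum>x\<in>UNIV. n x * L1 (\<lambda>y. U x y - U' x y))"
proof -
  have "\<bar>G U - G U'\<bar> = \<bar>\<Sum>x\<in>UNIV. n x * (gg (P x) (U x) - gg (P x) (U' x))\<bar>"
    unfolding Gfun_eq by (simp add: sum_subtractf algebra_simps)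
  also have "\<dots> \<le> (\<Sum>x\<in>UNIV. \<bar>n x * (gg (P x) (U x) - gg (P x) (U' x))\<bar>)" by (rule sum_abs)
  also have "\<dots> \<le> (\<Sum>x\<in>UNIV. n x * L1 (\<lambda>y. U x y - U' x y))"
  proof (rule sum_mono)
    fix x
    have "\<bar>gg (P x) (U x) - gg (P x) (U' x)\<bar> \<le> L1 (\<lambda>y. U x y - U' x y)" by (rule gg_lip[OF gP])
    then show "\<bar>n x * (gg (P x) (U x) - gg (P x) (U' x))\<bar> \<le> n x * L1 (\<lambda>y. U x y - U' x y)"
      using npos[of x] by (simp add: abs_mult)
  qed
  finally show ?thesis .
qed

lemma H_lip: "\<bar>H V - H V'\<bar> \<le> (\<Sum>y\<in>UNIV. m y * L1 (\<lambda>x. V x y - V' x y))"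
proof -
  have "\<bar>H V - H V'\<bar> = \<bar>\<Sum>y\<in>UNIV. m y * (gg (Q y) (\<lambda>x. V x y) - gg (Q y) (\<lambda>x. V' x y))\<bar>"
    unfolding Hfun_eq by (simp add: sum_subtractf algebra_simps)
  also have "\<dots> \<le> (\<Sum>y\<in>UNIV. \<bar>m y * (gg (Q y) (\<lambda>x. V x y) - gg (Q y) (\<lambda>x. V' x y))\<bar>)" by (rule sum_abs)
  also have "\<dots> \<le> (\<Sum>y\<in>UNIV. m y * L1 (\<lambda>x. V x y - V' x y))"
  proof (rule sum_mono)
    fix y
    have "\<bar>gg (Q y) (\<lambda>x. V x y) - gg (Q y) (\<lambda>x. V' x y)\<bar> \<le> L1 (\<lambda>x. V x y - V' x y)" by (rule gg_lip[OF gQ])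
    then show "\<bar>m y * (gg (Q y) (\<lambda>x. V x y) - gg (Q y) (\<lambda>x. V' x y))\<bar> \<le> m y * L1 (\<lambda>x. V x y - V' x y)"
      using mpos[of y] by (simp add: abs_mult)
  qed
  finally show ?thesis .
qed

definition tv :: "real^('x \<times> 'y) \<Rightarrow> 'x \<Rightarrow> 'y \<Rightarrow> real" where "tv w x y = w $ (x, y)"

lemma L1_tv_le: "L1 (\<lambda>y. tv w x y - tv w' x y) \<le> real CARD('y) * dist w w'"
proof -
  have "L1 (\<lambda>y. tv w x y - tv w' x y) \<le> real (card (UNIV::'y set)) * dist w w'"
    unfolding L1_def
  proof (rule sum_bounded_above)
    fix y
    have "\<bar>(w - w') $ (x, y)\<bar> \<le> norm (w - w')" by (rule component_le_norm_cart)
    then show "\<bar>tv w x y - tv w' x y\<bar> \<le> dist w w'" by (simp add: tv_def dist_norm)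
  qed
  then show ?thesis by simp
qed

lemma L1_tv_le2: "L1 (\<lambda>x. tv w x y - tv w' x y) \<le> real CARD('x) * dist w w'"
proof -
  have "L1 (\<lambda>x. tv w x y - tv w' x y) \<le> real (card (UNIV::'x set)) * dist w w'"
    unfolding L1_def
  proof (rule sum_bounded_above)
    fix x
    have "\<bar>(w - w') $ (x, y)\<bar> \<le> norm (w - w')" by (rule component_le_norm_cart)
    then show "\<bar>tv w x y - tv w' x y\<bar> \<le> dist w w'" by (simp add: tv_def dist_norm)
  qed
  then show ?thesis by simp
qed

lemma F_cont: "continuous_on S (\<lambda>w. G (tv w) + H (\<lambda>x y. Phi x y - tv w x y))"
proof (rule lipschitz_on_continuous_on, rule lipschitz_onI)
  define K where "K = (\<Sum>x\<in>UNIV. n x) * real CARD('y) + (\<Sum>y\<in>UNIV. m y) * real CARD('x)"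
  have "0 \<le> (\<Sum>x\<in>UNIV. n x)" by (rule sum_nonneg) (use npos in \<open>auto intro: less_imp_le\<close>)
  moreover have "0 \<le> (\<Sum>y\<in>UNIV. m y)" by (rule sum_nonneg) (use mpos in \<open>auto intro: less_imp_le\<close>)
  ultimately show "0 \<le> K" unfolding K_def by simp
  fix w w' :: "real^('x \<times> 'y)"
  have a: "\<bar>G (tv w) - G (tv w')\<bar> \<le> (\<Sum>x\<in>UNIV. n x) * real CARD('y) * dist w w'"
  proof -
    have "\<bar>G (tv w) - G (tv w')\<bar> \<le> (\<Sum>x\<in>UNIV. n x * L1 (\<lambda>y. tv w x y - tv w' x y))" by (rule G_lip)
    also have "\<dots> \<le> (\<Sum>x\<in>UNIV. n x * (real CARD('y) * dist w w'))"
      by (intro sum_mono mult_left_mono L1_tv_le) (use npos in \<open>auto intro: less_imp_le\<close>)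
    also have "\<dots> = (\<Sum>x\<in>UNIV. n x) * real CARD('y) * dist w w'" by (simp add: sum_distrib_right mult.assoc)
    finally show ?thesis .
  qed
  have b: "\<bar>H (\<lambda>x y. Phi x y - tv w x y) - H (\<lambda>x y. Phi x y - tv w' x y)\<bar> \<le> (\<Sum>y\<in>UNIV. m y) * real CARD('x) * dist w w'"
  proof -
    have "\<bar>H (\<lambda>x y. Phi x y - tv w x y) - H (\<lambda>x y. Phi x y - tv w' x y)\<bar>
       \<le> (\<Sum>y\<in>UNIV. m y * L1 (\<lambda>x. (Phi x y - tv w x y) - (Phi x y - tv w' x y)))" by (rule H_lip)
    also have "\<dots> = (\<Sum>y\<in>UNIV. m y * L1 (\<lambda>x. tv w' x y - tv w x y))" by simp
    also have "\<dots> \<le> (\<Sum>y\<in>UNIV. m y * (real CARD('x) * dist w w'))"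
      by (intro sum_mono mult_left_mono) (use npos L1_tv_le2[of w' _ w] mpos in \<open>auto intro: less_imp_le simp: dist_commute\<close>)
    also have "\<dots> = (\<Sum>y\<in>UNIV. m y) * real CARD('x) * dist w w'" by (simp add: sum_distrib_right mult.assoc)
    finally show ?thesis .
  qed
  show "dist (G (tv w) + H (\<lambda>x y. Phi x y - tv w x y)) (G (tv w') + H (\<lambda>x y. Phi x y - tv w' x y)) \<le> K * dist w w'"
    using a b unfolding K_def dist_real_def by (simp add: algebra_simps)
qed

lemma exists_min: "\<exists>U0. \<forall>U. G U0 + H (\<lambda>x y. Phi x y - U0 x y) \<le> G U + H (\<lambda>x y. Phi x y - U x y)"
proof -
  define F where "F U = G U + H (\<lambda>x y. Phi x y - U x y)" for U
  define R where "R = F (\<lambda>x y. 0) + cG + cH"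
  have bnds: "U x y \<le> R / n x \<and> Phi x y - R / m y \<le> U x y" if "F U \<le> F (\<lambda>x y. 0)" for U x y
  proof
    have "n x * (if True then U x y else 0) - cG \<le> G U" by (rule G_lower)
    moreover have "m y * (if False then (\<lambda>x y. Phi x y - U x y) x y else 0) - cH \<le> H (\<lambda>x y. Phi x y - U x y)" by (rule H_lower)
    ultimately have "n x * U x y \<le> R" using that unfolding R_def F_def by simp
    then show "U x y \<le> R / n x" using npos[of x] by (simp add: le_divide_eq mult.commute)
    have "n x * (if False then U x y else 0) - cG \<le> G U" by (rule G_lower)
    moreover have "m y * (if True then (\<lambda>x y. Phi x y - U x y) x y else 0) - cH \<le> H (\<lambda>x y. Phi x y - U x y)" by (rule H_lower)
    ultimately have "m y * (Phi x y - U x y) \<le> R" using that unfolding R_def F_def by simp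
    then have "Phi x y - U x y \<le> R / m y" using mpos[of y] by (simp add: le_divide_eq mult.commute)
    then show "Phi x y - R / m y \<le> U x y" by linarith
  qed
  define lo :: "real^('x \<times> 'y)" where "lo = (\<chi> p. Phi (fst p) (snd p) - R / m (snd p))"
  define hi :: "real^('x \<times> 'y)" where "hi = (\<chi> p. R / n (fst p))"
  define tw :: "('x \<Rightarrow> 'y \<Rightarrow> real) \<Rightarrow> real^('x \<times> 'y)" where "tw U = (\<chi> p. U (fst p) (snd p))" for U
  have tvtw: "tv (tw U) = U" for U unfolding tv_def tw_def by (auto intro!: ext)
  have inS: "tw U \<in> cbox lo hi" if "F U \<le> F (\<lambda>x y. 0)" for U
    unfolding mem_box_cart lo_def hi_def tw_def using bnds[OF that] by auto
  have "tw (\<lambda>x y. 0) \<in> cbox lo hi" by (rule inS) simp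
  then have ne: "cbox lo hi \<noteq> {}" by blast
  have cont: "continuous_on (cbox lo hi) (\<lambda>w. F (tv w))" unfolding F_def by (rule F_cont)
  obtain w0 where w0: "w0 \<in> cbox lo hi" and min: "\<And>w. w \<in> cbox lo hi \<Longrightarrow> F (tv w0) \<le> F (tv w)"
    using continuous_attains_inf[OF compact_cbox ne cont] by blast
  have "F (tv w0) \<le> F U" for U
  proof (cases "F U \<le> F (\<lambda>x y. 0)")
    case True then show ?thesis using min[OF inS[OF True]] tvtw by simp
  next
    case False
    have "F (tv w0) \<le> F (\<lambda>x y. 0)" using min[OF \<open>tw (\<lambda>x y. 0) \<in> cbox lo hi\<close>] tvtw by simp
    then show ?thesis using False by simp
  qed
  then show ?thesis unfolding F_def by blast
qed

lemma Gstar_ge: "ereal (total_surplus \<mu> U - G U) \<le> Gstar P \<mu> n"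
  unfolding Gstar_def by (rule SUP_upper) simp

lemma Hstar_ge: "ereal (total_surplus \<mu> V - H V) \<le> Hstar Q \<mu> m"
  unfolding Hstar_def by (rule SUP_upper) simp

lemma weak_dual: "ereal (total_surplus \<mu> Phi) + entropy P Q \<mu> n m \<le> ereal (G U + H (\<lambda>x y. Phi x y - U x y))"
proof -
  define V where "V = (\<lambda>x y. Phi x y - U x y)"
  define a where "a = total_surplus \<mu> U - G U"
  define b where "b = total_surplus \<mu> V - H V"
  have "ereal a + ereal b \<le> Gstar P \<mu> n + Hstar Q \<mu> m"
    unfolding a_def b_def by (intro add_mono Gstar_ge Hstar_ge)
  then have "entropy P Q \<mu> n m \<le> ereal (- (a + b))"
    unfolding entropy_def by (simp add: ereal_uminus_le_reorder add.commute)
  then have "ereal (total_surplus \<mu> Phi) + entropy P Q \<mu> n m \<le> ereal (total_surplus \<mu> Phi) + ereal (- (a + b))"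
    by (rule add_left_mono)
  also have "\<dots> = ereal (G U + H V)"
  proof -
    have "Phi = (\<lambda>x y. U x y + V x y)" unfolding V_def by simp
    then have "total_surplus \<mu> Phi = total_surplus \<mu> U + total_surplus \<mu> V" using ts_add by metis
    then show ?thesis unfolding a_def b_def by simp
  qed
  finally show ?thesis unfolding V_def .
qed

lemma W_le: "welfare P Q Phi n m \<le> ereal (G U + H (\<lambda>x y. Phi x y - U x y))"
  unfolding welfare_def by (rule SUP_least) (rule weak_dual)

lemma strong_dual:
  obtains U0 where "welfare P Q Phi n m = ereal (G U0 + H (\<lambda>x y. Phi x y - U0 x y))"
proof -
  obtain U0 where min: "\<And>U. G U0 + H (\<lambda>x y. Phi x y - U0 x y) \<le> G U + H (\<lambda>x y. Phi x y - U x y)"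
    using exists_min[of Phi] by blast
  define V0 where "V0 = (\<lambda>x y. Phi x y - U0 x y)"
  define F where "F U = G U + H (\<lambda>x y. Phi x y - U x y)" for U
  have Fsplit: "F (\<lambda>x y. U0 x y + t * D x y) - F U0 = (G (\<lambda>x y. U0 x y + t * D x y) - G U0) + (H (\<lambda>x y. V0 x y + t * (- D x y)) - H V0)" for t D
  proof -
    have "(\<lambda>x y. Phi x y - (U0 x y + t * D x y)) = (\<lambda>x y. V0 x y + t * (- D x y))" unfolding V0_def by (auto simp: algebra_simps)
    then show ?thesis unfolding F_def V0_def by simp
  qed
  have "(\<lambda>x y. gradG U0 x y - gradH V0 x y) = (\<lambda>x y. 0)"
  proof (rule foc[where f = F and U = U0])
    fix D :: "'x \<Rightarrow> 'y \<Rightarrow> real"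
    have "(\<lambda>k. (G (\<lambda>x y. U0 x y + tt k * D x y) - G U0) / tt k + (H (\<lambda>x y. V0 x y + tt k * (- D x y)) - H V0) / tt k)
       \<longlonglongrightarrow> total_surplus (gradG U0) D + total_surplus (gradH V0) (\<lambda>x y. - D x y)"
      by (intro tendsto_add G_deriv H_deriv)
    then show "(\<lambda>k. (F (\<lambda>x y. U0 x y + tt k * D x y) - F U0) / tt k) \<longlonglongrightarrow> total_surplus (\<lambda>x y. gradG U0 x y - gradH V0 x y) D"
      unfolding Fsplit by (simp add: add_divide_distrib ts_neg ts_diff1)
  next
    fix D :: "'x \<Rightarrow> 'y \<Rightarrow> real" and k
    show "tt k * total_surplus (\<lambda>x y. 0) D \<le> F (\<lambda>x y. U0 x y + tt k * D x y) - F U0"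
      using min[of "\<lambda>x y. U0 x y + tt k * D x y"] unfolding F_def total_surplus_def by simp
  qed
  then have "\<And>x y. gradG U0 x y - gradH V0 x y = 0" by meson
  then have eqgrad: "gradH V0 = gradG U0" by (intro ext) simp
  define \<mu>0 where "\<mu>0 = gradG U0"
  have mu0M: "\<mu>0 \<in> matchings n m"
    unfolding matchings_def
  proof (intro CollectI conjI allI)
    fix x y
    show "0 \<le> \<mu>0 x y" unfolding \<mu>0_def gradG_def using npos[of x] pr_nonneg[of "P x" "U0 x" y] by simp
  next
    fix x
    have "(\<Sum>y\<in>UNIV. \<mu>0 x y) = n x * (\<Sum>y\<in>UNIV. pr (P x) (U0 x) y)"
      unfolding \<mu>0_def gradG_def by (simp add: sum_distrib_left)
    also have "\<dots> \<le> n x * 1" using pr_sum_le1[OF gP] npos[of x] by (intro mult_left_mono) auto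
    finally show "(\<Sum>y\<in>UNIV. \<mu>0 x y) \<le> n x" by simp
  next
    fix y
    have "(\<Sum>x\<in>UNIV. \<mu>0 x y) = m y * (\<Sum>x\<in>UNIV. pr (Q y) (\<lambda>x. V0 x y) x)"
      unfolding \<mu>0_def eqgrad[symmetric] gradH_def by (simp add: sum_distrib_left)
    also have "\<dots> \<le> m y * 1" using pr_sum_le1[OF gQ] mpos[of y] by (intro mult_left_mono) auto
    finally show "(\<Sum>x\<in>UNIV. \<mu>0 x y) \<le> m y" by simp
  qed
  define a where "a = total_surplus \<mu>0 U0 - G U0"
  define b where "b = total_surplus \<mu>0 V0 - H V0"
  have Gs: "Gstar P \<mu>0 n = ereal a"
  proof (rule antisym)
    show "Gstar P \<mu>0 n \<le> ereal a" unfolding Gstar_def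
    proof (rule SUP_least)
      fix U
      have "total_surplus \<mu>0 (\<lambda>x y. U x y - U0 x y) \<le> G U - G U0" unfolding \<mu>0_def by (rule G_grad_ineq)
      then show "ereal (total_surplus \<mu>0 U - G U) \<le> ereal a" unfolding a_def ts_diff2 by simp
    qed
    show "ereal a \<le> Gstar P \<mu>0 n" unfolding a_def by (rule Gstar_ge)
  qed
  have Hs: "Hstar Q \<mu>0 m = ereal b"
  proof (rule antisym)
    show "Hstar Q \<mu>0 m \<le> ereal b" unfolding Hstar_def
    proof (rule SUP_least)
      fix V
      have "total_surplus \<mu>0 (\<lambda>x y. V x y - V0 x y) \<le> H V - H V0" unfolding \<mu>0_def eqgrad[symmetric] by (rule H_grad_ineq)
      then show "ereal (total_surplus \<mu>0 V - H V) \<le> ereal b" unfolding b_def ts_diff2 by simp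
    qed
    show "ereal b \<le> Hstar Q \<mu>0 m" unfolding b_def by (rule Hstar_ge)
  qed
  have "ereal (total_surplus \<mu>0 Phi) + entropy P Q \<mu>0 n m = ereal (G U0 + H V0)"
  proof -
    have "Phi = (\<lambda>x y. U0 x y + V0 x y)" unfolding V0_def by simp
    then have "total_surplus \<mu>0 Phi = total_surplus \<mu>0 U0 + total_surplus \<mu>0 V0" using ts_add by metis
    then show ?thesis unfolding entropy_def Gs Hs a_def b_def by simp
  qed
  moreover have "ereal (total_surplus \<mu>0 Phi) + entropy P Q \<mu>0 n m \<le> welfare P Q Phi n m"
    unfolding welfare_def by (rule SUP_upper) (rule mu0M)
  ultimately have "ereal (G U0 + H V0) \<le> welfare P Q Phi n m" by simp
  moreover have "welfare P Q Phi n m \<le> ereal (G U0 + H V0)" unfolding V0_def by (rule W_le)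
  ultimately show ?thesis using that unfolding V0_def by (metis antisym)
qed

lemma char:
  assumes st: "stable_matching P Q Phi n m \<mu>"
    and W: "welfare P Q Phi n m = ereal (G U1 + H (\<lambda>x y. Phi x y - U1 x y))"
  shows "gradG U1 = \<mu>" "gradH (\<lambda>x y. Phi x y - U1 x y) = \<mu>"
proof -
  define V1 where "V1 = (\<lambda>x y. Phi x y - U1 x y)"
  define a where "a = total_surplus \<mu> U1 - G U1"
  define b where "b = total_surplus \<mu> V1 - H V1"
  have tsPhi: "total_surplus \<mu> Phi = total_surplus \<mu> U1 + total_surplus \<mu> V1"
  proof -
    have "Phi = (\<lambda>x y. U1 x y + V1 x y)" unfolding V1_def by simp
    then show ?thesis using ts_add by metis
  qed
  have eq: "ereal (total_surplus \<mu> Phi) + entropy P Q \<mu> n m = ereal (G U1 + H V1)"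
    using st W unfolding stable_matching_def V1_def by simp
  have sum_eq: "Gstar P \<mu> n + Hstar Q \<mu> m = ereal (a + b)"
  proof (cases "entropy P Q \<mu> n m")
    case (real r)
    then have "r = G U1 + H V1 - total_surplus \<mu> Phi" using eq by simp
    then have "- (Gstar P \<mu> n + Hstar Q \<mu> m) = ereal (- (a + b))"
      using real unfolding entropy_def a_def b_def tsPhi by simp
    then show ?thesis by (metis ereal_uminus_uminus uminus_ereal.simps(1))
  qed (use eq in auto)
  have ga: "ereal a \<le> Gstar P \<mu> n" unfolding a_def by (rule Gstar_ge)
  have hb: "ereal b \<le> Hstar Q \<mu> m" unfolding b_def by (rule Hstar_ge)
  have Gs: "Gstar P \<mu> n = ereal a" and Hs: "Hstar Q \<mu> m = ereal b"
  proof -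
    obtain r where r: "Gstar P \<mu> n = ereal r"
      using sum_eq ga hb by (cases "Gstar P \<mu> n"; cases "Hstar Q \<mu> m") auto
    obtain s where s: "Hstar Q \<mu> m = ereal s"
      using sum_eq ga hb by (cases "Gstar P \<mu> n"; cases "Hstar Q \<mu> m") auto
    have "r + s = a + b" "a \<le> r" "b \<le> s" using sum_eq ga hb r s by auto
    then show "Gstar P \<mu> n = ereal a" "Hstar Q \<mu> m = ereal b" using r s by auto
  qed
  show "gradG U1 = \<mu>"
  proof (rule foc[where f = G and U = U1])
    fix D :: "'x \<Rightarrow> 'y \<Rightarrow> real"
    show "(\<lambda>k. (G (\<lambda>x y. U1 x y + tt k * D x y) - G U1) / tt k) \<longlonglongrightarrow> total_surplus (gradG U1) D"
      by (rule G_deriv)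
  next
    fix D :: "'x \<Rightarrow> 'y \<Rightarrow> real" and k
    have "ereal (total_surplus \<mu> (\<lambda>x y. U1 x y + tt k * D x y) - G (\<lambda>x y. U1 x y + tt k * D x y)) \<le> ereal a"
      using Gstar_ge[of \<mu> "\<lambda>x y. U1 x y + tt k * D x y"] unfolding Gs .
    then show "tt k * total_surplus \<mu> D \<le> G (\<lambda>x y. U1 x y + tt k * D x y) - G U1"
      unfolding a_def ts_add ts_scale by simp
  qed
  show "gradH (\<lambda>x y. Phi x y - U1 x y) = \<mu>"
  proof -
    have "gradH V1 = \<mu>"
    proof (rule foc[where f = H and U = V1])
      fix D :: "'x \<Rightarrow> 'y \<Rightarrow> real"
      show "(\<lambda>k. (H (\<lambda>x y. V1 x y + tt k * D x y) - H V1) / tt k) \<longlonglongrightarrow> total_surplus (gradH V1) D"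
        by (rule H_deriv)
    next
      fix D :: "'x \<Rightarrow> 'y \<Rightarrow> real" and k
      have "ereal (total_surplus \<mu> (\<lambda>x y. V1 x y + tt k * D x y) - H (\<lambda>x y. V1 x y + tt k * D x y)) \<le> ereal b"
        using Hstar_ge[of \<mu> "\<lambda>x y. V1 x y + tt k * D x y"] unfolding Hs .
      then show "tt k * total_surplus \<mu> D \<le> H (\<lambda>x y. V1 x y + tt k * D x y) - H V1"
        unfolding b_def ts_add ts_scale by simp
    qed
    then show ?thesis unfolding V1_def .
  qed
qed

lemma gradG_inj: assumes "gradG U = gradG U'" shows "U = U'"
proof (rule ext)
  fix x
  have "\<And>y. pr (P x) (U x) y = pr (P x) (U' x) y"
    using fun_cong[OF fun_cong[OF assms, of x]] npos[of x] unfolding gradG_def by simp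
  then show "U x = U' x" by (rule pr_inj[OF gP])
qed

lemma gradH_inj: assumes "gradH V = gradH V'" shows "V = V'"
proof -
  have "(\<lambda>x. V x y) = (\<lambda>x. V' x y)" for y
  proof -
    have "\<And>x. pr (Q y) (\<lambda>x. V x y) x = pr (Q y) (\<lambda>x. V' x y) x"
    proof -
      fix x
      show "pr (Q y) (\<lambda>x. V x y) x = pr (Q y) (\<lambda>x. V' x y) x"
        using fun_cong[OF fun_cong[OF assms, of x], of y] mpos[of y] unfolding gradH_def by simp
    qed
    then show ?thesis by (rule pr_inj[OF gQ])
  qed
  then show ?thesis by (intro ext) meson
qed

end


lemma comoment_ts: "comoment phi k \<mu> = total_surplus \<mu> (phi k)"
  unfolding comoment_def total_surplus_def ..

lemma ts_Phi_lin: "total_surplus \<mu> (Phi_lin phi lam) = (\<Sum>k\<in>UNIV. lam k * comoment phi k \<mu>)"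
proof -
  have "total_surplus \<mu> (Phi_lin phi lam) = (\<Sum>x\<in>UNIV. \<Sum>y\<in>UNIV. \<Sum>k\<in>UNIV. lam k * (\<mu> x y * phi k x y))"
    unfolding total_surplus_def Phi_lin_def by (simp add: sum_distrib_left mult.left_commute)
  also have "\<dots> = (\<Sum>x\<in>UNIV. \<Sum>k\<in>UNIV. \<Sum>y\<in>UNIV. lam k * (\<mu> x y * phi k x y))"
    by (rule sum.cong[OF refl], rule sum.swap)
  also have "\<dots> = (\<Sum>k\<in>UNIV. \<Sum>x\<in>UNIV. \<Sum>y\<in>UNIV. lam k * (\<mu> x y * phi k x y))"
    by (rule sum.swap)
  also have "\<dots> = (\<Sum>k\<in>UNIV. lam k * comoment phi k \<mu>)"
    unfolding comoment_def by (simp add: sum_distrib_left)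
  finally show ?thesis .
qed

lemma Phi_lin_shift:
  fixes phi :: "'k::finite \<Rightarrow> 'x \<Rightarrow> 'y \<Rightarrow> real"
  shows "Phi_lin phi (\<lambda>j. lam j + (if j = k then c else 0)) = (\<lambda>x y. Phi_lin phi lam x y + c * phi k x y)"
  unfolding Phi_lin_def by (auto intro!: ext simp: distrib_right sum.distrib if_distrib[of "\<lambda>t. t * _"] cong: if_cong)

lemma ereal_sum_eq:
  assumes "ereal a + e = ereal b" shows "e = ereal (b - a)"
  using assms by (cases e) auto

lemma ereal_sum_le:
  assumes "ereal a + e \<le> ereal b" shows "e \<le> ereal (b - a)"
  using assms by (cases e) auto

theorem theorem6:
  fixes P :: "'x::finite \<Rightarrow> (real^('y::finite option)) measure"
    and Q :: "'y \<Rightarrow> (real^('x option)) measure"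
    and phi :: "'k::finite \<Rightarrow> 'x \<Rightarrow> 'y \<Rightarrow> real"
    and nhat :: "'x \<Rightarrow> real" and mhat :: "'y \<Rightarrow> real"
    and muhat Phi mulam :: "'x \<Rightarrow> 'y \<Rightarrow> real"
    and lamhat :: "'k \<Rightarrow> real"
  assumes P_dist: "\<forall>x. full_support_ac (P x)
                        \<and> integrable (P x) (\<lambda>e. Max (range (\<lambda>z. \<bar>e $ z\<bar>)))"
    and Q_dist: "\<forall>y. full_support_ac (Q y)
                        \<and> integrable (Q y) (\<lambda>e. Max (range (\<lambda>z. \<bar>e $ z\<bar>)))"
    and phi_indep: "\<forall>c. (\<forall>x y. (\<Sum>k\<in>UNIV. c k * phi k x y) = 0) \<longrightarrow> (\<forall>k. c k = 0)"
    and n_pos: "\<forall>x. 0 < nhat x" and m_pos: "\<forall>y. 0 < mhat y"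
    and muhat_M: "muhat \<in> matchings nhat mhat"
    and muhat_pos: "\<forall>x y. 0 < muhat x y"
    and muhat_x0: "\<forall>x. (\<Sum>y\<in>UNIV. muhat x y) < nhat x"
    and muhat_0y: "\<forall>y. (\<Sum>x\<in>UNIV. muhat x y) < mhat y"
    and Phi_stable: "stable_matching P Q Phi nhat mhat muhat"
    and lamhat_MM: "MM_estimator P Q phi muhat nhat mhat lamhat"
    and mulam_stable: "stable_matching P Q (Phi_lin phi lamhat) nhat mhat mulam"
  shows "(\<forall>k. comoment phi k muhat = comoment phi k mulam)
       \<and> is_lagrange_mult P Q phi muhat nhat mhat lamhat
       \<and> entropy_max P Q phi muhat nhat mhat = entropy P Q mulam nhat mhat
       \<and> entropy P Q muhat nhat mhat \<le> entropy_max P Q phi muhat nhat mhat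
       \<and> (entropy P Q muhat nhat mhat = entropy_max P Q phi muhat nhat mhat
            \<longleftrightarrow> (\<exists>l. Phi_lin phi l = Phi))"
proof -
  have gP: "\<And>x. good (P x)" using P_dist unfolding good_def bnd_def by auto
  have gQ: "\<And>y. good (Q y)" using Q_dist unfolding good_def bnd_def by auto
  interpret mkt P Q nhat mhat
    using gP gQ n_pos m_pos by unfold_locales auto
  define Phi0 where "Phi0 = Phi_lin phi lamhat"
  define wr where "wr Psi = real_of_ereal (welfare P Q Psi nhat mhat)" for Psi
  have Wr: "welfare P Q Psi nhat mhat = ereal (wr Psi)" for Psi
  proof -
    obtain U where "welfare P Q Psi nhat mhat = ereal (G U + H (\<lambda>x y. Psi x y - U x y))"
      using strong_dual by blast
    then show ?thesis unfolding wr_def by simp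
  qed
  obtain U0 where U0: "welfare P Q Phi0 nhat mhat = ereal (G U0 + H (\<lambda>x y. Phi0 x y - U0 x y))"
    using strong_dual by blast
  define V0 where "V0 = (\<lambda>x y. Phi0 x y - U0 x y)"
  have wr0: "wr Phi0 = G U0 + H V0" using U0 Wr[of Phi0] unfolding V0_def by simp
  have Wup: "wr (\<lambda>x y. Phi0 x y + t * E x y) \<le> G U0 + H (\<lambda>x y. V0 x y + t * E x y)" for t E
  proof -
    have "(\<lambda>x y. (Phi0 x y + t * E x y) - U0 x y) = (\<lambda>x y. V0 x y + t * E x y)"
      unfolding V0_def by (auto simp: algebra_simps)
    then show ?thesis using W_le[of "\<lambda>x y. Phi0 x y + t * E x y" U0] Wr by simp
  qed
  have key: "c \<le> total_surplus (gradH V0) E"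
    if lb: "\<And>t. 0 < t \<Longrightarrow> wr Phi0 + t * c \<le> wr (\<lambda>x y. Phi0 x y + t * E x y)" for E c
  proof (rule LIMSEQ_le_const[OF H_deriv[of V0 E]], intro exI allI impI)
    fix k :: nat
    have "tt k * c \<le> H (\<lambda>x y. V0 x y + tt k * E x y) - H V0"
      using lb[OF tt_pos[of k]] Wup[of "tt k" E] wr0 by simp
    then show "c \<le> (H (\<lambda>x y. V0 x y + tt k * E x y) - H V0) / tt k"
      using tt_pos[of k] by (simp add: le_divide_eq mult.commute)
  qed
  have Wge: "ereal (total_surplus \<mu> Psi) + entropy P Q \<mu> nhat mhat \<le> ereal (wr Psi)"
    if "\<mu> \<in> matchings nhat mhat" for \<mu> Psi
  proof -
    have "ereal (total_surplus \<mu> Psi) + entropy P Q \<mu> nhat mhat \<le> welfare P Q Psi nhat mhat"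
      unfolding welfare_def using that by (rule SUP_upper)
    then show ?thesis using Wr[of Psi] by simp
  qed
  have Ent_le: "entropy P Q \<mu> nhat mhat \<le> ereal (wr Psi - total_surplus \<mu> Psi)"
    if "\<mu> \<in> matchings nhat mhat" for \<mu> Psi
    using Wge[OF that] by (rule ereal_sum_le)
  have mulamM: "mulam \<in> matchings nhat mhat" using mulam_stable unfolding stable_matching_def by simp
  have Entmu: "entropy P Q mulam nhat mhat = ereal (wr Phi0 - total_surplus mulam Phi0)"
    using mulam_stable Wr[of Phi0] unfolding stable_matching_def Phi0_def by (auto intro: ereal_sum_eq)
  have lbmu: "wr Phi0 + total_surplus mulam Psi - total_surplus mulam Phi0 \<le> wr Psi" for Psi
    using Ent_le[OF mulamM, of Psi] Entmu by simp
  have lbhat: "wr Phi0 + t * total_surplus muhat E \<le> wr (\<lambda>x y. Phi0 x y + t * E x y)"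
    if "Phi_lin phi l = (\<lambda>x y. Phi0 x y + t * E x y)" for l t E
  proof -
    have "ereal (total_surplus muhat (Phi_lin phi l)) - welfare P Q (Phi_lin phi l) nhat mhat
          \<le> ereal (total_surplus muhat (Phi_lin phi lamhat)) - welfare P Q (Phi_lin phi lamhat) nhat mhat"
      using lamhat_MM unfolding MM_estimator_def by blast
    then have "total_surplus muhat (\<lambda>x y. Phi0 x y + t * E x y) - wr (\<lambda>x y. Phi0 x y + t * E x y)
          \<le> total_surplus muhat Phi0 - wr Phi0"
      unfolding that Phi0_def[symmetric] Wr by simp
    then show ?thesis unfolding ts_add ts_scale by simp
  qed
  have part1: "total_surplus muhat (phi k) = total_surplus mulam (phi k)" for k
  proof -
    have A: "total_surplus muhat (\<lambda>x y. s * phi k x y) \<le> total_surplus (gradH V0) (\<lambda>x y. s * phi k x y)"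
      and B: "total_surplus mulam (\<lambda>x y. s * phi k x y) \<le> total_surplus (gradH V0) (\<lambda>x y. s * phi k x y)" for s
    proof -
      have sh: "Phi_lin phi (\<lambda>j. lamhat j + (if j = k then t * s else 0)) = (\<lambda>x y. Phi0 x y + t * (s * phi k x y))" for t
        unfolding Phi_lin_shift Phi0_def by (simp add: mult.assoc)
      show "total_surplus muhat (\<lambda>x y. s * phi k x y) \<le> total_surplus (gradH V0) (\<lambda>x y. s * phi k x y)"
        by (rule key) (rule lbhat[OF sh])
      show "total_surplus mulam (\<lambda>x y. s * phi k x y) \<le> total_surplus (gradH V0) (\<lambda>x y. s * phi k x y)"
      proof (rule key)
        fix t :: real
        show "wr Phi0 + t * total_surplus mulam (\<lambda>x y. s * phi k x y) \<le> wr (\<lambda>x y. Phi0 x y + t * (s * phi k x y))"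
          using lbmu[of "\<lambda>x y. Phi0 x y + t * (s * phi k x y)"] unfolding ts_add ts_scale by simp
      qed
    qed
    from A[of 1] A[of "-1"] B[of 1] B[of "-1"] show ?thesis unfolding ts_scale by simp
  qed
  have C1: "\<forall>k. comoment phi k muhat = comoment phi k mulam"
    using part1 unfolding comoment_ts by simp
  have tsPhi0: "total_surplus mulam Phi0 = total_surplus muhat Phi0"
    unfolding Phi0_def ts_Phi_lin using C1 by simp
  define feas where "feas = {\<mu>\<in>matchings nhat mhat. \<forall>k. comoment phi k \<mu> = comoment phi k muhat}"
  have mulam_feas: "mulam \<in> feas" unfolding feas_def using mulamM C1 by simp
  have muhat_feas: "muhat \<in> feas" unfolding feas_def using muhat_M by simp
  have lagr_term: "(\<Sum>k\<in>UNIV. lamhat k * (comoment phi k \<mu> - comoment phi k muhat)) = total_surplus \<mu> Phi0 - total_surplus muhat Phi0" for \<mu>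
    unfolding Phi0_def ts_Phi_lin by (simp add: right_diff_distrib sum_subtractf)
  define L where "L = (SUP \<mu>\<in>matchings nhat mhat. entropy P Q \<mu> nhat mhat
          + ereal (\<Sum>k\<in>UNIV. lamhat k * (comoment phi k \<mu> - comoment phi k muhat)))"
  have L_le: "L \<le> entropy P Q mulam nhat mhat"
    unfolding L_def
  proof (rule SUP_least)
    fix \<mu> assume "\<mu> \<in> matchings nhat mhat"
    then have "entropy P Q \<mu> nhat mhat \<le> ereal (wr Phi0 - total_surplus \<mu> Phi0)" by (rule Ent_le)
    then have "entropy P Q \<mu> nhat mhat + ereal (total_surplus \<mu> Phi0 - total_surplus muhat Phi0)
        \<le> ereal (wr Phi0 - total_surplus \<mu> Phi0) + ereal (total_surplus \<mu> Phi0 - total_surplus muhat Phi0)"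
      by (rule add_right_mono)
    then show "entropy P Q \<mu> nhat mhat + ereal (\<Sum>k\<in>UNIV. lamhat k * (comoment phi k \<mu> - comoment phi k muhat))
        \<le> entropy P Q mulam nhat mhat"
      unfolding lagr_term Entmu tsPhi0 by simp
  qed
  have Emax_def': "entropy_max P Q phi muhat nhat mhat = (SUP \<mu>\<in>feas. entropy P Q \<mu> nhat mhat)"
    unfolding entropy_max_def feas_def ..
  have Emax_ge: "entropy P Q \<mu> nhat mhat \<le> entropy_max P Q phi muhat nhat mhat" if "\<mu> \<in> feas" for \<mu>
    unfolding Emax_def' using that by (rule SUP_upper)
  have Emax_le_L: "entropy_max P Q phi muhat nhat mhat \<le> L"
    unfolding Emax_def'
  proof (rule SUP_least)
    fix \<mu> assume f: "\<mu> \<in> feas"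
    then have "(\<Sum>k\<in>UNIV. lamhat k * (comoment phi k \<mu> - comoment phi k muhat)) = 0"
      unfolding feas_def by simp
    then have "entropy P Q \<mu> nhat mhat = entropy P Q \<mu> nhat mhat + ereal (\<Sum>k\<in>UNIV. lamhat k * (comoment phi k \<mu> - comoment phi k muhat))"
      by simp
    also have "\<dots> \<le> L" unfolding L_def using f unfolding feas_def by (intro SUP_upper) auto
    finally show "entropy P Q \<mu> nhat mhat \<le> L" .
  qed
  have Emax_eq: "entropy_max P Q phi muhat nhat mhat = entropy P Q mulam nhat mhat"
    using Emax_le_L L_le Emax_ge[OF mulam_feas] by order
  have L_eq: "L = entropy P Q mulam nhat mhat"
    using Emax_le_L L_le Emax_ge[OF mulam_feas] by order
  have C2: "is_lagrange_mult P Q phi muhat nhat mhat lamhat"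
    unfolding is_lagrange_mult_def using Emax_eq L_eq unfolding L_def by simp
  have C4: "entropy P Q muhat nhat mhat \<le> entropy_max P Q phi muhat nhat mhat"
    by (rule Emax_ge[OF muhat_feas])
  have C5: "entropy P Q muhat nhat mhat = entropy_max P Q phi muhat nhat mhat \<longleftrightarrow> (\<exists>l. Phi_lin phi l = Phi)"
  proof
    assume eq: "entropy P Q muhat nhat mhat = entropy_max P Q phi muhat nhat mhat"
    then have Ehat: "entropy P Q muhat nhat mhat = ereal (wr Phi0 - total_surplus muhat Phi0)"
      using Emax_eq Entmu tsPhi0 by simp
    have st0: "stable_matching P Q Phi0 nhat mhat muhat"
      unfolding stable_matching_def using muhat_M Ehat Wr[of Phi0] by simp
    have g0: "gradG U0 = muhat" "gradH (\<lambda>x y. Phi0 x y - U0 x y) = muhat"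
      using char[OF st0 U0] by auto
    obtain U1 where U1: "welfare P Q Phi nhat mhat = ereal (G U1 + H (\<lambda>x y. Phi x y - U1 x y))"
      using strong_dual by blast
    have g1: "gradG U1 = muhat" "gradH (\<lambda>x y. Phi x y - U1 x y) = muhat"
      using char[OF Phi_stable U1] by auto
    have "U0 = U1" by (rule gradG_inj) (use g0(1) g1(1) in simp)
    moreover have "(\<lambda>x y. Phi0 x y - U0 x y) = (\<lambda>x y. Phi x y - U1 x y)"
      by (rule gradH_inj) (use g0(2) g1(2) in simp)
    ultimately have "\<And>x y. Phi0 x y - U0 x y = Phi x y - U0 x y" by meson
    then have "Phi0 = Phi" by (intro ext) simp
    then show "\<exists>l. Phi_lin phi l = Phi" unfolding Phi0_def by blast
  next
    assume "\<exists>l. Phi_lin phi l = Phi"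
    then obtain l where l: "Phi_lin phi l = Phi" by blast
    have "entropy_max P Q phi muhat nhat mhat \<le> entropy P Q muhat nhat mhat"
      unfolding Emax_def'
    proof (rule SUP_least)
      fix \<mu> assume f: "\<mu> \<in> feas"
      then have tsq: "total_surplus \<mu> Phi = total_surplus muhat Phi"
        unfolding feas_def l[symmetric] ts_Phi_lin by simp
      have "ereal (total_surplus \<mu> Phi) + entropy P Q \<mu> nhat mhat \<le> welfare P Q Phi nhat mhat"
        unfolding welfare_def using f unfolding feas_def by (intro SUP_upper) auto
      also have "\<dots> = ereal (total_surplus muhat Phi) + entropy P Q muhat nhat mhat"
        using Phi_stable unfolding stable_matching_def by simp
      finally show "entropy P Q \<mu> nhat mhat \<le> entropy P Q muhat nhat mhat"
        unfolding tsq by (simp add: ereal_add_le_add_iff)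
    qed
    then show "entropy P Q muhat nhat mhat = entropy_max P Q phi muhat nhat mhat"
      using C4 by (rule antisym[rotated])
  qed
  show ?thesis using C1 C2 Emax_eq C4 C5 by blast
qed

end
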